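(* Let $a=t_0<t_1<\cdots<t_m=b$ be a partition of $[a,b]$ and let $x_0,x_1,\ldots,x_m\in\mathbb{R}^n$ be fixed. Let $A(t)$ and $B(t)$ be real $n\times n$ matrix functions on $[a,b]$ such that (H1) $B(t)$ has full rank (is nonsingular) for every $t$; (H2) the control system $\dot x(t)=A(t)x(t)+B(t)u(t)$ is completely state controllable; (H3) $t\mapsto A(t)$ and $t\mapsto B(t)$ are $C^1$-smooth. Consider the optimal control problem $(P)$: \[\min_{u(\cdot)}\ J[u(\cdot)]=\int_a^b\langle B(t)u(t),B(t)u(t)\rangle\,dt\] subject to $\dot x(t)=A(t)x(t)+B(t)u(t)$ and $x(t_i)=x_i$ for $i=0,1,\ldots,m$, with unrestricted control $u:[a,b]\to\mathbb{R}^n$ and absolutely continuous state $x:[a,b]\to\mathbb{R}^n$. Let $\Phi(t,s)$ be the state transition matrix of $\dot x=A(t)x$, and for each $i=0,\ldots,m-1$ let $S=\int_{t_i}^{t_{i+1}}\Phi(t_i,s)\Phi(t_i,s)'\,ds$ (a symmetric matrix). Then the optimal state trajectory of $(P)$ has, in each interval $[t_i,t_{i+1}]$, $i=0,1,\ldots,m-1$, the explicit expression \[x(t)=\Phi(t,t_i)x_i+\left(\int_{t_i}^{t}\Phi(t,s)\Phi(t_i,s)'\,ds\right)S^{-1}\big(\Phi(t_i,t_{i+1})x_{i+1}-x_i\big),\] and the optimal control of $(P)$ has, in each interval $[t_i,t_{i+1}]$, the explicit expression \[u(t)=B(t)^{-1}\Phi(t_i,t)'\,S^{-1}\big(\Ph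i(t_i,t_{i+1})x_{i+1}-x_i\big).\]
   Context: $\langle\cdot,\cdot\rangle$ is the Euclidean inner product on $\mathbb{R}^n$ and a prime ${}'$ denotes transpose. The state transition matrix $\Phi(t,s)$ is the matrix with $\frac{\partial}{\partial t}\Phi(t,s)=A(t)\Phi(t,s)$ and $\Phi(s,s)=I$. *)

theory Defs
  imports "HOL-Analysis.Analysis"
begin

text \<open>Admissible process on [c,d] for the system x' = A x + B u:
  the control u is (Lebesgue) measurable with B u square integrable (finite cost),
  and the state x is absolutely continuous with x' = A x + B u a.e., expressed in the
  equivalent integral form x(tau) = x(c) + integral of an absolutely integrable
  right-hand side.\<close>
definition admissible ::
  "(real \<Rightarrow> real^'n^'n) \<Rightarrow> (real \<Rightarrow> real^'n^'n) \<Rightarrow> real \<Rightarrow> real \<Rightarrow>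
   (real \<Rightarrow> real^'n) \<Rightarrow> (real \<Rightarrow> real^'n) \<Rightarrow> bool" where
  "admissible A B c d x u \<longleftrightarrow>
     u measurable_on {c..d} \<and>
     (\<lambda>s. (B s *v u s) \<bullet> (B s *v u s)) integrable_on {c..d} \<and>
     (\<lambda>s. A s *v x s + B s *v u s) absolutely_integrable_on {c..d} \<and>
     (\<forall>\<tau>\<in>{c..d}. x \<tau> = x c + integral {c..\<tau>} (\<lambda>s. A s *v x s + B s *v u s))"

definition completely_controllable ::
  "(real \<Rightarrow> real^'n^'n) \<Rightarrow> (real \<Rightarrow> real^'n^'n) \<Rightarrow> real \<Rightarrow> real \<Rightarrow> bool" where
  "completely_controllable A B a b \<longleftrightarrow>
     (\<forall>c d (y0::real^'n) y1. a \<le> c \<and> c < d \<and> d \<le> b \<longrightarrow>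
        (\<exists>x u. admissible A B c d x u \<and> x c = y0 \<and> x d = y1))"

definition state_transition ::
  "(real \<Rightarrow> real^'n^'n) \<Rightarrow> real \<Rightarrow> real \<Rightarrow> (real \<Rightarrow> real \<Rightarrow> real^'n^'n) \<Rightarrow> bool" where
  "state_transition A a b \<Phi> \<longleftrightarrow>
     (\<forall>s\<in>{a..b}. \<Phi> s s = mat 1 \<and>
        (\<forall>t\<in>{a..b}. ((\<lambda>r. \<Phi> r s) has_vector_derivative (A t ** \<Phi> t s)) (at t within {a..b})))"

definition cost :: "(real \<Rightarrow> real^'n^'n) \<Rightarrow> real \<Rightarrow> real \<Rightarrow> (real \<Rightarrow> real^'n) \<Rightarrow> real" where
  "cost B a b u = integral {a..b} (\<lambda>s. (B s *v u s) \<bullet> (B s *v u s))"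

definition feasibleP where
  "feasibleP A B a b m (tp :: nat \<Rightarrow> real) (xs :: nat \<Rightarrow> real^'n) x u \<longleftrightarrow>
     admissible A B a b x u \<and> (\<forall>i\<le>m. x (tp i) = xs i)"

definition optimalP where
  "optimalP A B a b m tp xs x u \<longleftrightarrow>
     feasibleP A B a b m tp xs x u \<and>
     (\<forall>x' u'. feasibleP A B a b m tp xs x' u' \<longrightarrow> cost B a b u \<le> cost B a b u')"

end

theory Submission
  imports Defs
begin


lemma linear_mm_left: "linear (\<lambda>B::real^'n^'m. A ** B)"
  by (rule linearI) (auto simp: matrix_add_ldistrib matrix_scalar_ac vec_eq_iff matrix_matrix_mult_def sum_distrib_left sum.distrib algebra_simps)

lemma linear_mm_right: "linear (\<lambda>A::real^'m^'k. A ** B)"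
  by (rule linearI) (auto simp: vec_eq_iff matrix_matrix_mult_def sum_distrib_left sum.distrib algebra_simps)

lemma bilinear_mm: "bilinear (\<lambda>(A::real^'m^'k) (B::real^'n^'m). A ** B)"
  unfolding bilinear_def using linear_mm_left linear_mm_right by blast

lemma linear_mv_left: "linear (\<lambda>A::real^'m^'k. A *v x)"
  by (rule linearI) (auto simp: vec_eq_iff matrix_vector_mult_def sum_distrib_left sum.distrib algebra_simps)

lemma bilinear_mv: "bilinear (\<lambda>(A::real^'m^'k) (x::real^'m). A *v x)"
  unfolding bilinear_def using linear_mv_left matrix_vector_mul_linear by blast

lemma bb_mm: "bounded_bilinear (\<lambda>(A::real^'m^'k) (B::real^'n^'m). A ** B)"
  using bilinear_mm bilinear_conv_bounded_bilinear by blast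

lemma bb_mv: "bounded_bilinear (\<lambda>(A::real^'m^'k) (x::real^'m). A *v x)"
  using bilinear_mv bilinear_conv_bounded_bilinear by blast

lemma minv:
  assumes "invertible (A::real^'n^'n)"
  shows "A ** matrix_inv A = mat 1" "matrix_inv A ** A = mat 1"
  using someI_ex[OF assms[unfolded invertible_def]] unfolding matrix_inv_def by auto

lemma gronwall_sq:
  fixes y :: "real \<Rightarrow> 'v::real_inner"
  assumes der: "\<And>t. t \<in> {c..d} \<Longrightarrow> (y has_vector_derivative y' t) (at t within {c..d})"
    and bnd: "\<And>t. t \<in> {c..d} \<Longrightarrow> norm (y' t) \<le> K * norm (y t)"
    and K: "K \<ge> 0" and t0: "t0 \<in> {c..d}" and t: "t \<in> {c..d}"
  shows "norm (y t)^2 \<le> norm (y t0)^2 * exp (2*K*\<bar>t - t0\<bar>)"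
proof -
  define g where "g s = y s \<bullet> y s" for s
  have gd: "(g has_field_derivative 2 * (y s \<bullet> y' s)) (at s within {c..d})" if "s \<in> {c..d}" for s
    unfolding g_def has_field_derivative_def
    apply (rule has_derivative_eq_rhs[OF has_derivative_inner[OF der[OF that, unfolded has_vector_derivative_def] der[OF that, unfolded has_vector_derivative_def]]])
    by (auto simp: fun_eq_iff inner_commute algebra_simps)
  have gb: "\<bar>2 * (y s \<bullet> y' s)\<bar> \<le> 2 * K * g s" if "s \<in> {c..d}" for s
  proof -
    have "\<bar>y s \<bullet> y' s\<bar> \<le> norm (y s) * norm (y' s)" by (rule Cauchy_Schwarz_ineq2)
    also have "\<dots> \<le> norm (y s) * (K * norm (y s))" by (rule mult_left_mono[OF bnd[OF that]]) simp
    finally show ?thesis by (simp add: g_def power2_norm_eq_inner[symmetric] power2_eq_square algebra_simps)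
  qed
  have g0: "g s \<ge> 0" for s by (simp add: g_def)
  have "g t \<le> g t0 * exp (2*K*\<bar>t - t0\<bar>)"
  proof (cases "t0 \<le> t")
    case True
    define ph where "ph s = exp (- (2*K* s)) * g s" for s
    have "\<And>s. t0 \<le> s \<Longrightarrow> s \<le> t \<Longrightarrow> (ph has_derivative ((*) (exp (- (2*K* s)) * (2 * (y s \<bullet> y' s) - 2*K*g s)))) (at s within {t0..t})"
    proof -
      fix s assume s: "t0 \<le> s" "s \<le> t"
      have sc: "s \<in> {c..d}" using s t0 t by auto
      have "(ph has_field_derivative (exp (- (2*K* s)) * (2 * (y s \<bullet> y' s) - 2*K*g s))) (at s within {c..d})"
        unfolding ph_def
        by (rule derivative_eq_intros gd[OF sc] | simp)+ (simp add: algebra_simps)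
      then have "(ph has_field_derivative (exp (- (2*K* s)) * (2 * (y s \<bullet> y' s) - 2*K*g s))) (at s within {t0..t})"
        by (rule DERIV_subset) (use t0 t in auto)
      then show "(ph has_derivative ((*) (exp (- (2*K* s)) * (2 * (y s \<bullet> y' s) - 2*K*g s)))) (at s within {t0..t})"
        unfolding has_field_derivative_def .
    qed
    from mvt_very_simple[OF True this] obtain \<xi> where xi: "\<xi> \<in> {t0..t}"
      and eq: "ph t - ph t0 = (exp (- (2*K*\<xi>)) * (2 * (y \<xi> \<bullet> y' \<xi>) - 2*K*g \<xi>)) * (t - t0)" by blast
    have "\<xi> \<in> {c..d}" using xi t0 t by auto
    from gb[OF this] have "2 * (y \<xi> \<bullet> y' \<xi>) - 2*K*g \<xi> \<le> 0" by linarith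
    then have "(exp (- (2*K*\<xi>)) * (2 * (y \<xi> \<bullet> y' \<xi>) - 2*K*g \<xi>)) * (t - t0) \<le> 0"
      using True by (intro mult_nonpos_nonneg mult_nonneg_nonpos) auto
    with eq have "exp (- (2*K*t)) * g t \<le> exp (- (2*K*t0)) * g t0" unfolding ph_def by linarith
    then have "exp (2*K*t) * (exp (- (2*K*t)) * g t) \<le> exp (2*K*t) * (exp (- (2*K*t0)) * g t0)"
      by (rule mult_left_mono) simp
    then have "g t \<le> g t0 * (exp (2*K*t) * exp (- (2*K*t0)))"
      by (simp add: mult_exp_exp algebra_simps)
    then show ?thesis using True by (simp add: mult_exp_exp algebra_simps)
  next
    case False
    then have le: "t \<le> t0" by simp
    define ph where "ph s = exp (2*K* s) * g s" for s
    have "\<And>s. t \<le> s \<Longrightarrow> s \<le> t0 \<Longrightarrow> (ph has_derivative ((*) (exp (2*K* s) * (2 * (y s \<bullet> y' s) + 2*K*g s)))) (at s within {t..t0})"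
    proof -
      fix s assume s: "t \<le> s" "s \<le> t0"
      have sc: "s \<in> {c..d}" using s t0 t by auto
      have "(ph has_field_derivative (exp (2*K* s) * (2 * (y s \<bullet> y' s) + 2*K*g s))) (at s within {c..d})"
        unfolding ph_def
        by (rule derivative_eq_intros gd[OF sc] | simp)+ (simp add: algebra_simps)
      then have "(ph has_field_derivative (exp (2*K* s) * (2 * (y s \<bullet> y' s) + 2*K*g s))) (at s within {t..t0})"
        by (rule DERIV_subset) (use t0 t in auto)
      then show "(ph has_derivative ((*) (exp (2*K* s) * (2 * (y s \<bullet> y' s) + 2*K*g s)))) (at s within {t..t0})"
        unfolding has_field_derivative_def .
    qed
    from mvt_very_simple[OF le this] obtain \<xi> where xi: "\<xi> \<in> {t..t0}"
      and eq: "ph t0 - ph t = (exp (2*K*\<xi>) * (2 * (y \<xi> \<bullet> y' \<xi>) + 2*K*g \<xi>)) * (t0 - t)" by blast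
    have "\<xi> \<in> {c..d}" using xi t0 t by auto
    from gb[OF this] have "2 * (y \<xi> \<bullet> y' \<xi>) + 2*K*g \<xi> \<ge> 0" by linarith
    then have "(exp (2*K*\<xi>) * (2 * (y \<xi> \<bullet> y' \<xi>) + 2*K*g \<xi>)) * (t0 - t) \<ge> 0"
      using le by (intro mult_nonneg_nonneg) auto
    with eq have "exp (2*K*t) * g t \<le> exp (2*K*t0) * g t0" unfolding ph_def by linarith
    then have "exp (- (2*K*t)) * (exp (2*K*t) * g t) \<le> exp (- (2*K*t)) * (exp (2*K*t0) * g t0)"
      by (rule mult_left_mono) simp
    then have "g t \<le> g t0 * (exp (- (2*K*t)) * exp (2*K*t0))"
      by (simp add: mult_exp_exp algebra_simps)
    then show ?thesis using le by (simp add: mult_exp_exp algebra_simps)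
  qed
  then show ?thesis by (simp add: g_def power2_norm_eq_inner)
qed

lemma ode_unique0:
  fixes y :: "real \<Rightarrow> 'v::real_inner"
  assumes der: "\<And>t. t \<in> {c..d} \<Longrightarrow> (y has_vector_derivative y' t) (at t within {c..d})"
    and bnd: "\<And>t. t \<in> {c..d} \<Longrightarrow> norm (y' t) \<le> K * norm (y t)"
    and K: "K \<ge> 0" and t0: "t0 \<in> {c..d}" and y0: "y t0 = 0" and t: "t \<in> {c..d}"
  shows "y t = 0"
  using gronwall_sq[OF der bnd K t0 t] y0 by simp


lemma continuous_on_transpose:
  assumes "continuous_on S (f :: 'x::topological_space \<Rightarrow> real^'n^'m)"
  shows "continuous_on S (\<lambda>x. transpose (f x))"
  unfolding transpose_def
  by (intro continuous_on_vec_lambda allI continuous_on_component[OF continuous_on_component[OF assms]])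

lemma bounded_mm: obtains C where "C > 0" "\<And>(X::real^'m^'k) (Y::real^'n^'m). norm (X ** Y) \<le> C * norm X * norm Y"
  using bilinear_bounded_pos[OF bilinear_mm] by auto

lemma bounded_mv: obtains C where "C > 0" "\<And>(X::real^'m^'k) (y::real^'m). norm (X *v y) \<le> C * norm X * norm y"
  using bilinear_bounded_pos[OF bilinear_mv] by auto

lemma matrix_mul_rzero_my: "(A::real^'m^'k) ** (0::real^'n^'m) = 0"
  by (simp add: matrix_matrix_mult_def vec_eq_iff)

lemma matrix_sub_ldistrib: "(A::real^'m^'k) ** (B - C) = A ** B - A ** C"
  by (simp add: matrix_matrix_mult_def vec_eq_iff sum_subtractf algebra_simps)

locale stm =
  fixes A :: "real \<Rightarrow> real^'n^'n" and a b :: real and \<Phi> :: "real \<Rightarrow> real \<Rightarrow> real^'n^'n"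
  assumes st: "state_transition A a b \<Phi>"
    and Ac: "continuous_on {a..b} A"
begin

lemma Phi_diag: "s \<in> {a..b} \<Longrightarrow> \<Phi> s s = mat 1"
  using st unfolding state_transition_def by auto

lemma Phi_der: "s \<in> {a..b} \<Longrightarrow> t \<in> {a..b} \<Longrightarrow>
   ((\<lambda>r. \<Phi> r s) has_vector_derivative (A t ** \<Phi> t s)) (at t within {a..b})"
  using st unfolding state_transition_def by auto

lemma Phi_cont1: assumes "s \<in> {a..b}" shows "continuous_on {a..b} (\<lambda>r. \<Phi> r s)"
  unfolding continuous_on_eq_continuous_within
  using has_vector_derivative_continuous[OF Phi_der[OF assms]] by blast

lemma KA: obtains K where "K \<ge> 0" "\<And>t. t \<in> {a..b} \<Longrightarrow> norm (A t) \<le> K"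
proof -
  have "compact (A ` {a..b})" by (rule compact_continuous_image[OF Ac compact_Icc])
  then obtain K where "\<forall>x\<in>A ` {a..b}. norm x \<le> K" using compact_imp_bounded bounded_iff by blast
  then show ?thesis using that[of "max K 0"] by force
qed

lemma lin_ode_unique:
  fixes y :: "real \<Rightarrow> real^'m^'n"
  assumes der: "\<And>t. t \<in> {a..b} \<Longrightarrow> (y has_vector_derivative A t ** y t) (at t within {a..b})"
    and "t0 \<in> {a..b}" "y t0 = 0" "t \<in> {a..b}"
  shows "y t = 0"
proof -
  obtain K where K: "K \<ge> 0" "\<And>t. t \<in> {a..b} \<Longrightarrow> norm (A t) \<le> K" using KA by blast
  obtain C where C: "C > 0" "\<And>(X::real^'n^'n) (Y::real^'m^'n). norm (X ** Y) \<le> C * norm X * norm Y" using bounded_mm by blast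
  have "norm (A t ** y t) \<le> (C * K) * norm (y t)" if "t \<in> {a..b}" for t
  proof -
    have "norm (A t ** y t) \<le> C * norm (A t) * norm (y t)" by (rule C(2))
    also have "\<dots> \<le> C * K * norm (y t)" using K(2)[OF that] C(1) by (intro mult_right_mono mult_left_mono) auto
    finally show ?thesis .
  qed
  then show ?thesis using ode_unique0[OF der, of "C*K" t0 t] assms C(1) K(1) by simp
qed

lemma lin_ode_unique_v:
  fixes y :: "real \<Rightarrow> real^'n"
  assumes der: "\<And>t. t \<in> {a..b} \<Longrightarrow> (y has_vector_derivative A t *v y t) (at t within {a..b})"
    and "t0 \<in> {a..b}" "y t0 = 0" "t \<in> {a..b}"
  shows "y t = 0"
proof -
  obtain K where K: "K \<ge> 0" "\<And>t. t \<in> {a..b} \<Longrightarrow> norm (A t) \<le> K" using KA by blast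
  obtain C where C: "C > 0" "\<And>(X::real^'n^'n) (Y::real^'n). norm (X *v Y) \<le> C * norm X * norm Y" using bounded_mv by blast
  have "norm (A t *v y t) \<le> (C * K) * norm (y t)" if "t \<in> {a..b}" for t
  proof -
    have "norm (A t *v y t) \<le> C * norm (A t) * norm (y t)" by (rule C(2))
    also have "\<dots> \<le> C * K * norm (y t)" using K(2)[OF that] C(1) by (intro mult_right_mono mult_left_mono) auto
    finally show ?thesis .
  qed
  then show ?thesis using ode_unique0[OF der, of "C*K" t0 t] assms C(1) K(1) by simp
qed

lemma Phi_comp:
  assumes "r \<in> {a..b}" "s \<in> {a..b}" "q \<in> {a..b}"
  shows "\<Phi> r s ** \<Phi> s q = \<Phi> r q"
proof -
  define y where "y r = \<Phi> r s ** \<Phi> s q - \<Phi> r q" for r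
  have "(y has_vector_derivative A t ** y t) (at t within {a..b})" if "t \<in> {a..b}" for t
  proof -
    have d1: "((\<lambda>r. \<Phi> r s ** \<Phi> s q) has_vector_derivative (\<Phi> t s ** 0 + (A t ** \<Phi> t s) ** \<Phi> s q)) (at t within {a..b})"
      using bounded_bilinear.has_vector_derivative[OF bb_mm Phi_der[OF assms(2) that] has_vector_derivative_const[of "\<Phi> s q"]]
      by simp
    have "(y has_vector_derivative ((\<Phi> t s ** 0 + (A t ** \<Phi> t s) ** \<Phi> s q) - A t ** \<Phi> t q)) (at t within {a..b})"
      unfolding y_def by (rule has_vector_derivative_diff[OF d1 Phi_der[OF assms(3) that]])
    then have "(y has_vector_derivative ((A t ** \<Phi> t s) ** \<Phi> s q - A t ** \<Phi> t q)) (at t within {a..b})"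
      by (simp add: matrix_mul_rzero_my)
    moreover have "(A t ** \<Phi> t s) ** \<Phi> s q - A t ** \<Phi> t q = A t ** y t"
      by (simp add: y_def matrix_mul_assoc matrix_sub_ldistrib)
    ultimately show ?thesis by simp
  qed
  moreover have "y s = 0" using Phi_diag[OF assms(2)] by (simp add: y_def)
  ultimately have "y r = 0" using lin_ode_unique assms by blast
  then show ?thesis by (simp add: y_def)
qed

lemma Phi_inv: "r \<in> {a..b} \<Longrightarrow> s \<in> {a..b} \<Longrightarrow> \<Phi> r s ** \<Phi> s r = mat 1"
  using Phi_comp Phi_diag by auto

lemma Phi_bound: obtains C where "C > 0" "\<And>r s. r \<in> {a..b} \<Longrightarrow> s \<in> {a..b} \<Longrightarrow> norm (\<Phi> r s) \<le> C"
proof -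
  obtain K where K: "K \<ge> 0" "\<And>t. t \<in> {a..b} \<Longrightarrow> norm (A t) \<le> K" using KA by blast
  obtain C where C: "C > 0" "\<And>(X::real^'n^'n) (Y::real^'n^'n). norm (X ** Y) \<le> C * norm X * norm Y" using bounded_mm by blast
  define M where "M = sqrt (norm (mat 1 :: real^'n^'n)^2 * exp (2*(C*K)*(b-a))) + 1"
  have "norm (\<Phi> r s) \<le> M" if r: "r \<in> {a..b}" and s: "s \<in> {a..b}" for r s
  proof -
    have bnd: "norm (A t ** \<Phi> t s) \<le> (C * K) * norm (\<Phi> t s)" if "t \<in> {a..b}" for t
    proof -
      have "norm (A t ** \<Phi> t s) \<le> C * norm (A t) * norm (\<Phi> t s)" by (rule C(2))
      also have "\<dots> \<le> C * K * norm (\<Phi> t s)" using K(2)[OF that] C(1) by (intro mult_right_mono mult_left_mono) auto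
      finally show ?thesis .
    qed
    have "norm (\<Phi> r s)^2 \<le> norm (\<Phi> s s)^2 * exp (2*(C*K)*\<bar>r - s\<bar>)"
      by (rule gronwall_sq[where y="\<lambda>r. \<Phi> r s", OF Phi_der[OF s] bnd]) (use C(1) K(1) r s in auto)
    also have "\<dots> \<le> norm (mat 1 :: real^'n^'n)^2 * exp (2*(C*K)*(b-a))"
    proof -
      have "\<bar>r - s\<bar> \<le> b - a" using r s by auto
      moreover have "C * K \<ge> 0" using C(1) K(1) by simp
      ultimately have "2*(C*K)*\<bar>r - s\<bar> \<le> 2*(C*K)*(b-a)" by (simp add: mult_left_mono)
      then have "exp (2*(C*K)*\<bar>r - s\<bar>) \<le> exp (2*(C*K)*(b-a))" by simp
      then show ?thesis using Phi_diag[OF s] by (simp add: mult_left_mono)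
    qed
    finally have "norm (\<Phi> r s) \<le> sqrt (norm (mat 1 :: real^'n^'n)^2 * exp (2*(C*K)*(b-a)))"
      using real_le_rsqrt by blast
    then show ?thesis unfolding M_def by linarith
  qed
  moreover have "M > 0" unfolding M_def by (simp add: add_nonneg_pos)
  ultimately show ?thesis using that by blast
qed

lemma Phi_cont2:
  assumes q: "q \<in> {a..b}"
  shows "continuous_on {a..b} (\<lambda>s. \<Phi> q s)"
proof -
  obtain M where M: "M > 0" "\<And>r s. r \<in> {a..b} \<Longrightarrow> s \<in> {a..b} \<Longrightarrow> norm (\<Phi> r s) \<le> M" using Phi_bound by blast
  obtain C where C: "C > 0" "\<And>(X::real^'n^'n) (Y::real^'n^'n). norm (X ** Y) \<le> C * norm X * norm Y" using bounded_mm by blast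
  show ?thesis unfolding continuous_on_iff
  proof (intro ballI allI impI)
    fix s0 e :: real assume s0: "s0 \<in> {a..b}" and e: "0 < e"
    have eCM: "e / (C * M) > 0" using e C(1) M(1) by simp
    from Phi_cont1[OF s0, unfolded continuous_on_iff, rule_format, OF s0 eCM]
    obtain d where d: "d > 0" "\<forall>s\<in>{a..b}. dist s s0 < d \<longrightarrow> dist (\<Phi> s s0) (\<Phi> s0 s0) < e / (C * M)"
      by blast
    show "\<exists>d>0. \<forall>s\<in>{a..b}. dist s s0 < d \<longrightarrow> dist (\<Phi> q s) (\<Phi> q s0) < e"
    proof (intro exI conjI ballI impI)
      fix s assume s: "s \<in> {a..b}" and ds: "dist s s0 < d"
      have "\<Phi> q s - \<Phi> q s0 = \<Phi> q s ** (\<Phi> s0 s0 - \<Phi> s s0)"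
        using Phi_comp[OF q s s0] Phi_diag[OF s0] by (simp add: matrix_sub_ldistrib)
      then have "dist (\<Phi> q s) (\<Phi> q s0) = norm (\<Phi> q s ** (\<Phi> s0 s0 - \<Phi> s s0))" by (simp add: dist_norm)
      also have "\<dots> \<le> C * norm (\<Phi> q s) * norm (\<Phi> s0 s0 - \<Phi> s s0)" by (rule C(2))
      also have "\<dots> \<le> C * M * norm (\<Phi> s0 s0 - \<Phi> s s0)"
        using M(2)[OF q s] C(1) by (intro mult_right_mono mult_left_mono) auto
      also have "\<dots> < C * M * (e / (C * M))"
        using d(2) s ds C(1) M(1) by (intro mult_strict_left_mono) (auto simp: dist_norm norm_minus_commute)
      also have "\<dots> = e" using C(1) M(1) by simp
      finally show "dist (\<Phi> q s) (\<Phi> q s0) < e" .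
    qed (use d in auto)
  qed
qed

end


lemma cont_bounded_img:
  assumes "continuous_on {c..d} (f :: real \<Rightarrow> 'b::real_normed_vector)"
  shows "bounded (f ` {c..d})"
  by (rule compact_imp_bounded[OF compact_continuous_image[OF assms compact_Icc]])

lemma abs_int_mv:
  fixes M :: "real \<Rightarrow> real^'m^'k" and g :: "real \<Rightarrow> real^'m"
  assumes "continuous_on {c..d} M" "g absolutely_integrable_on {c..d}"
  shows "(\<lambda>r. M r *v g r) absolutely_integrable_on {c..d}"
  using absolutely_integrable_bounded_measurable_product[OF bilinear_mv
      continuous_imp_measurable_on_sets_lebesgue[OF assms(1)] _ cont_bounded_img[OF assms(1)] assms(2)]
  by simp

lemma le_eps_imp_zero:
  fixes x Q :: real
  assumes "\<And>e. e > 0 \<Longrightarrow> x \<le> e * Q" "Q \<ge> 0" "x \<ge> 0"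
  shows "x = 0"
proof (rule ccontr)
  assume "x \<noteq> 0" then have x: "x > 0" using assms(3) by simp
  have "x \<le> (x / (2 * (Q + 1))) * Q" using assms(1)[of "x / (2 * (Q + 1))"] x assms(2) by simp
  also have "\<dots> < x"
  proof -
    have "(x / (2 * (Q + 1))) * Q = x * (Q / (2 * (Q + 1)))" by simp
    also have "Q / (2 * (Q + 1)) < 1" using assms(2) by (simp add: field_simps)
    then have "x * (Q / (2 * (Q + 1))) < x * 1" using x by (intro mult_strict_left_mono) auto
    finally show ?thesis by simp
  qed
  finally show False by simp
qed

lemma ibp:
  fixes M M' :: "real \<Rightarrow> real^'m^'k" and g :: "real \<Rightarrow> real^'m"
  assumes cd: "c \<le> d"
    and Md: "\<And>t. t \<in> {c..d} \<Longrightarrow> (M has_vector_derivative M' t) (at t within {c..d})"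
    and M'c: "continuous_on {c..d} M'"
    and g: "g absolutely_integrable_on {c..d}"
  shows "integral {c..d} (\<lambda>r. M' r *v integral {c..r} g) = M d *v integral {c..d} g - integral {c..d} (\<lambda>r. M r *v g r)"
proof -
  define G where "G r = integral {c..r} g" for r
  have gi: "g integrable_on {c..d}" using g absolutely_integrable_on_def by blast
  have ngi: "(\<lambda>s. norm (g s)) integrable_on {c..d}" using g absolutely_integrable_on_def by blast
  have Gc: "continuous_on {c..d} G" unfolding G_def by (rule indefinite_integral_continuous_1[OF gi])
  have Mc: "continuous_on {c..d} M"
    unfolding continuous_on_eq_continuous_within using has_vector_derivative_continuous[OF Md] by blast
  have Mg: "(\<lambda>r. M r *v g r) integrable_on {c..d}"
    using abs_int_mv[OF Mc g] absolutely_integrable_on_def by blast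
  have M'G: "continuous_on {c..d} (\<lambda>r. M' r *v G r)"
    by (rule bilinear_continuous_on_compose[OF M'c Gc bilinear_mv])
  have nM': "continuous_on {c..d} (\<lambda>s. norm (M' s))" by (intro continuous_intros M'c)
  define F where "F s = norm (M' s) + norm (g s)" for s
  have Fi: "F integrable_on {c..d}" unfolding F_def
    by (intro integrable_add ngi integrable_continuous_real nM')
  define P where "P t = integral {c..t} F" for t
  define \<Theta> where "\<Theta> t = M t *v G t - integral {c..t} (\<lambda>r. M r *v g r) - integral {c..t} (\<lambda>r. M' r *v G r)" for t
  obtain C where C: "C > 0" "\<And>(X::real^'m^'k) (y::real^'m). norm (X *v y) \<le> C * norm X * norm y" using bounded_mv by blast
  have sub: "f integrable_on {\<alpha>..\<beta>}" if "f integrable_on {c..d}" "c \<le> \<alpha>" "\<beta> \<le> d" for f :: "real \<Rightarrow> 'z::banach" and \<alpha> \<beta>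
    using integrable_subinterval_real[OF that(1)] that(2,3) by auto
  have comb: "integral {c..\<beta>} f = integral {c..\<alpha>} f + integral {\<alpha>..\<beta>} f"
    if "f integrable_on {c..d}" "c \<le> \<alpha>" "\<alpha> \<le> \<beta>" "\<beta> \<le> d" for f :: "real \<Rightarrow> 'z::banach" and \<alpha> \<beta>
    using Henstock_Kurzweil_Integration.integral_combine[OF that(2,3) sub[OF that(1) order.refl that(4)]] by simp
  have step: "\<Theta> \<beta> - \<Theta> \<alpha> = integral {\<alpha>..\<beta>} (\<lambda>s. M' s *v (G \<alpha> - G s)) + integral {\<alpha>..\<beta>} (\<lambda>s. (M \<beta> - M s) *v g s)"
    if ab: "c \<le> \<alpha>" "\<alpha> \<le> \<beta>" "\<beta> \<le> d" for \<alpha> \<beta>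
  proof -
    have gab: "g integrable_on {\<alpha>..\<beta>}" using sub[OF gi] ab by auto
    have Mgab: "(\<lambda>r. M r *v g r) integrable_on {\<alpha>..\<beta>}" using sub[OF Mg] ab by auto
    have M'Gab: "(\<lambda>r. M' r *v G r) integrable_on {\<alpha>..\<beta>}" using sub[OF integrable_continuous_real[OF M'G]] ab by auto
    have M'ab: "M' integrable_on {\<alpha>..\<beta>}" using sub[OF integrable_continuous_real[OF M'c]] ab by auto
    have G1: "G \<beta> = G \<alpha> + integral {\<alpha>..\<beta>} g" unfolding G_def using comb[OF gi ab] .
    have ftc: "(M' has_integral (M \<beta> - M \<alpha>)) {\<alpha>..\<beta>}"
      by (rule fundamental_theorem_of_calculus[OF ab(2)])
         (rule has_vector_derivative_within_subset[OF Md], use ab in auto)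
    have l1: "integral {\<alpha>..\<beta>} (\<lambda>s. M' s *v G \<alpha>) = (M \<beta> - M \<alpha>) *v G \<alpha>"
    proof -
      have "((\<lambda>X. X *v G \<alpha>) \<circ> M' has_integral (M \<beta> - M \<alpha>) *v G \<alpha>) {\<alpha>..\<beta>}"
        by (rule has_integral_linear[OF ftc]) (rule bounded_bilinear.bounded_linear_left[OF bb_mv, simplified])
      then show ?thesis by (simp add: o_def integral_unique)
    qed
    have l2: "integral {\<alpha>..\<beta>} (\<lambda>s. M \<beta> *v g s) = M \<beta> *v integral {\<alpha>..\<beta>} g"
    proof -
      have "integral {\<alpha>..\<beta>} ((\<lambda>v. M \<beta> *v v) \<circ> g) = M \<beta> *v integral {\<alpha>..\<beta>} g"
        by (rule integral_linear[OF gab]) (rule matrix_vector_mul_bounded_linear)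
      then show ?thesis by (simp add: o_def)
    qed
    have i1: "(\<lambda>s. M' s *v G \<alpha>) integrable_on {\<alpha>..\<beta>}"
      by (intro integrable_continuous_real bilinear_continuous_on_compose[OF _ _ bilinear_mv]
            continuous_on_subset[OF M'c] continuous_on_const) (use ab in auto)
    have i2: "(\<lambda>s. M \<beta> *v g s) integrable_on {\<alpha>..\<beta>}"
      using gab matrix_vector_mul_bounded_linear integrable_linear[of g "{\<alpha>..\<beta>}" "\<lambda>v. M \<beta> *v v"]
      by (simp add: o_def)
    have "\<Theta> \<beta> - \<Theta> \<alpha> = (M \<beta> *v G \<beta> - M \<alpha> *v G \<alpha>) - integral {\<alpha>..\<beta>} (\<lambda>r. M r *v g r) - integral {\<alpha>..\<beta>} (\<lambda>r. M' r *v G r)"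
      unfolding \<Theta>_def comb[OF Mg ab] comb[OF integrable_continuous_real[OF M'G] ab] by (simp add: algebra_simps)
    also have "M \<beta> *v G \<beta> - M \<alpha> *v G \<alpha> = (M \<beta> - M \<alpha>) *v G \<alpha> + M \<beta> *v integral {\<alpha>..\<beta>} g"
      unfolding G1 by (simp add: algebra_simps matrix_vector_mult_diff_rdistrib)
    also have "\<dots> = integral {\<alpha>..\<beta>} (\<lambda>s. M' s *v G \<alpha>) + integral {\<alpha>..\<beta>} (\<lambda>s. M \<beta> *v g s)"
      using l1 l2 by simp
    finally have "\<Theta> \<beta> - \<Theta> \<alpha> = (integral {\<alpha>..\<beta>} (\<lambda>s. M' s *v G \<alpha>) - integral {\<alpha>..\<beta>} (\<lambda>r. M' r *v G r))
        + (integral {\<alpha>..\<beta>} (\<lambda>s. M \<beta> *v g s) - integral {\<alpha>..\<beta>} (\<lambda>r. M r *v g r))" by simp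
    also have "\<dots> = integral {\<alpha>..\<beta>} (\<lambda>s. M' s *v G \<alpha> - M' s *v G s) + integral {\<alpha>..\<beta>} (\<lambda>s. M \<beta> *v g s - M s *v g s)"
      using integral_diff[OF i1 M'Gab] integral_diff[OF i2 Mgab] by simp
    also have "\<dots> = integral {\<alpha>..\<beta>} (\<lambda>s. M' s *v (G \<alpha> - G s)) + integral {\<alpha>..\<beta>} (\<lambda>s. (M \<beta> - M s) *v g s)"
      by (simp add: matrix_vector_mult_diff_distrib matrix_vector_mult_diff_rdistrib)
    finally show ?thesis .
  qed
  have Gu: "uniformly_continuous_on {c..d} G" by (rule compact_uniformly_continuous[OF Gc compact_Icc])
  have Mu: "uniformly_continuous_on {c..d} M" by (rule compact_uniformly_continuous[OF Mc compact_Icc])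
  have main: "norm (\<Theta> d) \<le> e * (C * P d)" if e: "e > 0" for e
  proof -
    obtain \<delta>1 where d1: "\<delta>1 > 0" "\<forall>x\<in>{c..d}. \<forall>x'\<in>{c..d}. dist x' x < \<delta>1 \<longrightarrow> dist (G x') (G x) < e"
      using Gu e unfolding uniformly_continuous_on_def by metis
    obtain \<delta>2 where d2: "\<delta>2 > 0" "\<forall>x\<in>{c..d}. \<forall>x'\<in>{c..d}. dist x' x < \<delta>2 \<longrightarrow> dist (M x') (M x) < e"
      using Mu e unfolding uniformly_continuous_on_def by metis
    define \<delta> where "\<delta> = min \<delta>1 \<delta>2"
    have \<delta>: "\<delta> > 0" using d1 d2 by (simp add: \<delta>_def)
    have local: "norm (\<Theta> \<beta> - \<Theta> \<alpha>) \<le> e * (C * (P \<beta> - P \<alpha>))"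
      if ab: "c \<le> \<alpha>" "\<alpha> \<le> \<beta>" "\<beta> \<le> d" "\<beta> - \<alpha> < \<delta>" for \<alpha> \<beta>
    proof -
      have Fab: "F integrable_on {\<alpha>..\<beta>}" using sub[OF Fi] ab by auto
      have gab: "g integrable_on {\<alpha>..\<beta>}" using sub[OF gi] ab by auto
      have ngab: "(\<lambda>s. norm (g s)) integrable_on {\<alpha>..\<beta>}" using sub[OF ngi] ab by auto
      have nM'ab: "(\<lambda>s. norm (M' s)) integrable_on {\<alpha>..\<beta>}" using sub[OF integrable_continuous_real[OF nM']] ab by auto
      have j1: "(\<lambda>s. M' s *v (G \<alpha> - G s)) integrable_on {\<alpha>..\<beta>}"
        by (intro integrable_continuous_real bilinear_continuous_on_compose[OF _ _ bilinear_mv]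
            continuous_on_subset[OF M'c] continuous_intros continuous_on_subset[OF Gc]) (use ab in auto)
      have j2: "(\<lambda>s. (M \<beta> - M s) *v g s) integrable_on {\<alpha>..\<beta>}"
      proof -
        have "continuous_on {\<alpha>..\<beta>} (\<lambda>s. M \<beta> - M s)"
          by (intro continuous_intros continuous_on_subset[OF Mc]) (use ab in auto)
        moreover have "g absolutely_integrable_on {\<alpha>..\<beta>}"
          by (rule absolutely_integrable_on_subinterval[OF g]) (use ab in auto)
        ultimately show ?thesis using abs_int_mv absolutely_integrable_on_def by blast
      qed
      have b1: "norm (integral {\<alpha>..\<beta>} (\<lambda>s. M' s *v (G \<alpha> - G s))) \<le> integral {\<alpha>..\<beta>} (\<lambda>s. C * e * norm (M' s))"
      proof (rule integral_norm_bound_integral[OF j1])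
        show "(\<lambda>s. C * e * norm (M' s)) integrable_on {\<alpha>..\<beta>}" using integrable_on_cmult_left[OF nM'ab, of "C*e"] by simp 
        fix s assume s: "s \<in> {\<alpha>..\<beta>}"
        have "norm (G \<alpha> - G s) \<le> e"
          using d1(2) s ab \<delta>_def by (auto simp: dist_norm norm_minus_commute intro: less_imp_le)
        then show "norm (M' s *v (G \<alpha> - G s)) \<le> C * e * norm (M' s)"
          using C(2)[of "M' s" "G \<alpha> - G s"] C(1)
          by (smt (verit) mult_left_mono mult.commute mult.left_commute norm_ge_zero mult_nonneg_nonneg)
      qed
      have b2: "norm (integral {\<alpha>..\<beta>} (\<lambda>s. (M \<beta> - M s) *v g s)) \<le> integral {\<alpha>..\<beta>} (\<lambda>s. C * e * norm (g s))"
      proof (rule integral_norm_bound_integral[OF j2])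
        show "(\<lambda>s. C * e * norm (g s)) integrable_on {\<alpha>..\<beta>}" using integrable_on_cmult_left[OF ngab, of "C*e"] by simp
        fix s assume s: "s \<in> {\<alpha>..\<beta>}"
        have "norm (M \<beta> - M s) \<le> e"
          using d2(2) s ab \<delta>_def by (auto simp: dist_norm intro: less_imp_le)
        then show "norm ((M \<beta> - M s) *v g s) \<le> C * e * norm (g s)"
          using C(2)[of "M \<beta> - M s" "g s"] C(1)
          by (smt (verit) mult_right_mono mult_left_mono norm_ge_zero mult_nonneg_nonneg)
      qed
      have "norm (\<Theta> \<beta> - \<Theta> \<alpha>) \<le> integral {\<alpha>..\<beta>} (\<lambda>s. C * e * norm (M' s)) + integral {\<alpha>..\<beta>} (\<lambda>s. C * e * norm (g s))"
        unfolding step[OF ab(1-3)] using b1 b2 norm_triangle_le by (smt (verit) norm_triangle_ineq)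
      also have "\<dots> = C * e * integral {\<alpha>..\<beta>} F"
        unfolding F_def using integral_add[OF nM'ab ngab] by (simp add: algebra_simps)
      also have "integral {\<alpha>..\<beta>} F = P \<beta> - P \<alpha>" unfolding P_def using comb[OF Fi ab(1-3)] by simp
      finally show ?thesis by (simp add: algebra_simps)
    qed
    obtain N :: nat where N: "real N > (d - c) / \<delta>" using reals_Archimedean2 by blast
    have Npos: "N > 0" using N cd \<delta> by (cases N) (auto simp: field_simps)
    define h where "h = (d - c) / N"
    have h0: "h \<ge> 0" using cd by (simp add: h_def)
    have hd: "h < \<delta>" using N \<delta> Npos unfolding h_def by (simp add: field_simps)
    have ind: "norm (\<Theta> (c + real k * h)) \<le> e * (C * P (c + real k * h))" if "k \<le> N" for k
      using that
    proof (induction k)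
      case 0
      then show ?case by (simp add: \<Theta>_def G_def P_def)
    next
      case (Suc k)
      have kh: "real k * h \<le> real N * h" using Suc.prems h0 by (intro mult_right_mono) auto
      have Nh: "real N * h = d - c" using Npos by (simp add: h_def)
      have kh2: "real (Suc k) * h \<le> real N * h" using Suc.prems h0 by (intro mult_right_mono) auto
      have "norm (\<Theta> (c + real (Suc k) * h)) \<le> norm (\<Theta> (c + real k * h)) + norm (\<Theta> (c + real (Suc k) * h) - \<Theta> (c + real k * h))"
        by (smt (verit) norm_triangle_ineq2)
      also have "\<dots> \<le> e * (C * P (c + real k * h)) + e * (C * (P (c + real (Suc k) * h) - P (c + real k * h)))"
        using Suc.IH Suc.prems local[of "c + real k * h" "c + real (Suc k) * h"] h0 hd kh kh2 Nh
        by (intro add_mono) (auto simp: algebra_simps)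
      finally show ?case by (simp add: algebra_simps)
    qed
    have "c + real N * h = d" using Npos by (simp add: h_def)
    then show ?thesis using ind[of N] by simp
  qed
  have P0: "P d \<ge> 0" unfolding P_def F_def by (rule integral_nonneg[OF Fi[unfolded F_def]]) auto
  have "norm (\<Theta> d) = 0"
    by (rule le_eps_imp_zero[of _ "C * P d"]) (use main C P0 in auto)
  then show ?thesis unfolding \<Theta>_def G_def by (simp add: algebra_simps)
qed


context stm begin

lemma lin_ode_unique_sub:
  fixes y :: "real \<Rightarrow> real^'n"
  assumes sub: "{c..d} \<subseteq> {a..b}"
    and der: "\<And>t. t \<in> {c..d} \<Longrightarrow> (y has_vector_derivative A t *v y t) (at t within {c..d})"
    and "t0 \<in> {c..d}" "y t0 = 0" "t \<in> {c..d}"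
  shows "y t = 0"
proof -
  obtain K where K: "K \<ge> 0" "\<And>t. t \<in> {a..b} \<Longrightarrow> norm (A t) \<le> K" using KA by blast
  obtain C where C: "C > 0" "\<And>(X::real^'n^'n) (Y::real^'n). norm (X *v Y) \<le> C * norm X * norm Y" using bounded_mv by blast
  have "norm (A t *v y t) \<le> (C * K) * norm (y t)" if "t \<in> {c..d}" for t
  proof -
    have "norm (A t *v y t) \<le> C * norm (A t) * norm (y t)" by (rule C(2))
    also have "\<dots> \<le> C * K * norm (y t)" using K(2) that sub C(1) by (intro mult_right_mono mult_left_mono) auto
    finally show ?thesis .
  qed
  then show ?thesis using ode_unique0[OF der, of "C*K" t0 t] assms C(1) K(1) by simp
qed

lemma vc_sol:
  fixes w :: "real \<Rightarrow> real^'n" and y0 :: "real^'n"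
  assumes sub: "{c..d} \<subseteq> {a..b}" and cd: "c \<le> d"
    and w: "w absolutely_integrable_on {c..d}"
  defines "X \<equiv> \<lambda>\<tau>. \<Phi> \<tau> c *v (y0 + integral {c..\<tau>} (\<lambda>s. \<Phi> c s *v w s))"
  shows "continuous_on {c..d} X"
    and "(\<lambda>s. A s *v X s + w s) absolutely_integrable_on {c..d}"
    and "\<And>\<tau>. \<tau> \<in> {c..d} \<Longrightarrow> X \<tau> = y0 + integral {c..\<tau>} (\<lambda>s. A s *v X s + w s)"
proof -
  have c: "c \<in> {a..b}" using sub cd by auto
  define g where "g s = \<Phi> c s *v w s" for s
  define G where "G r = integral {c..r} g" for r
  have Phic2: "continuous_on {c..d} (\<lambda>s. \<Phi> c s)" by (rule continuous_on_subset[OF Phi_cont2[OF c] sub])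
  have Phic1: "continuous_on {c..d} (\<lambda>s. \<Phi> s c)" by (rule continuous_on_subset[OF Phi_cont1[OF c] sub])
  have Acd: "continuous_on {c..d} A" by (rule continuous_on_subset[OF Ac sub])
  have g: "g absolutely_integrable_on {c..d}" unfolding g_def by (rule abs_int_mv[OF Phic2 w])
  have gi: "g integrable_on {c..d}" using g absolutely_integrable_on_def by blast
  have Gc: "continuous_on {c..d} G" unfolding G_def by (rule indefinite_integral_continuous_1[OF gi])
  have Xeq: "X \<tau> = \<Phi> \<tau> c *v (y0 + G \<tau>)" for \<tau> by (simp add: X_def G_def g_def[abs_def])
  show Xc: "continuous_on {c..d} X"
    unfolding Xeq[abs_def]
    by (intro bilinear_continuous_on_compose[OF Phic1 _ bilinear_mv] continuous_intros Gc)
  have AXc: "continuous_on {c..d} (\<lambda>s. A s *v X s)"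
    by (rule bilinear_continuous_on_compose[OF Acd Xc bilinear_mv])
  show AXw: "(\<lambda>s. A s *v X s + w s) absolutely_integrable_on {c..d}"
    using set_integral_add(1)[OF absolutely_integrable_continuous_real[OF AXc] w] .
  have wi: "w integrable_on {c..d}" using w absolutely_integrable_on_def by blast
  fix \<tau> assume \<tau>: "\<tau> \<in> {c..d}"
  have sub2: "{c..\<tau>} \<subseteq> {a..b}" using sub \<tau> by auto
  have Md: "((\<lambda>r. \<Phi> r c) has_vector_derivative A t ** \<Phi> t c) (at t within {c..\<tau>})" if "t \<in> {c..\<tau>}" for t
    using has_vector_derivative_within_subset[OF Phi_der[OF c, of t] sub2] that sub2 by auto
  have M'c: "continuous_on {c..\<tau>} (\<lambda>t. A t ** \<Phi> t c)"
    by (rule bilinear_continuous_on_compose[OF continuous_on_subset[OF Ac sub2] continuous_on_subset[OF Phi_cont1[OF c] sub2] bilinear_mm])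
  have g\<tau>: "g absolutely_integrable_on {c..\<tau>}" by (rule absolutely_integrable_on_subinterval[OF g]) (use \<tau> in auto)
  have ibp1: "integral {c..\<tau>} (\<lambda>r. (A r ** \<Phi> r c) *v G r) = \<Phi> \<tau> c *v G \<tau> - integral {c..\<tau>} (\<lambda>r. \<Phi> r c *v g r)"
    unfolding G_def by (rule ibp[OF _ Md M'c g\<tau>]) (use \<tau> in auto)
  have Mg: "\<Phi> r c *v g r = w r" if "r \<in> {c..\<tau>}" for r
    using Phi_inv[of r c] that sub2 c by (simp add: g_def matrix_vector_mul_assoc)
  have ibp2: "integral {c..\<tau>} (\<lambda>r. \<Phi> r c *v g r) = integral {c..\<tau>} w"
    by (rule integral_cong) (use Mg in auto)
  have ftc: "((\<lambda>t. A t ** \<Phi> t c) has_integral (\<Phi> \<tau> c - \<Phi> c c)) {c..\<tau>}"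
    by (rule fundamental_theorem_of_calculus) (use \<tau> Md in auto)
  have l1: "integral {c..\<tau>} (\<lambda>r. (A r ** \<Phi> r c) *v y0) = (\<Phi> \<tau> c - mat 1) *v y0"
  proof -
    have "((\<lambda>X. X *v y0) \<circ> (\<lambda>t. A t ** \<Phi> t c) has_integral (\<Phi> \<tau> c - \<Phi> c c) *v y0) {c..\<tau>}"
      by (rule has_integral_linear[OF ftc]) (rule bounded_bilinear.bounded_linear_left[OF bb_mv, simplified])
    then show ?thesis using Phi_diag[OF c] by (simp add: o_def integral_unique)
  qed
  have AX: "A r *v X r = (A r ** \<Phi> r c) *v y0 + (A r ** \<Phi> r c) *v G r" for r
    by (simp add: Xeq matrix_vector_mul_assoc matrix_vector_right_distrib)
  have i1: "(\<lambda>r. (A r ** \<Phi> r c) *v y0) integrable_on {c..\<tau>}"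
    by (intro integrable_continuous_real bilinear_continuous_on_compose[OF M'c _ bilinear_mv] continuous_on_const)
  have i2: "(\<lambda>r. (A r ** \<Phi> r c) *v G r) integrable_on {c..\<tau>}"
    by (intro integrable_continuous_real bilinear_continuous_on_compose[OF M'c _ bilinear_mv] continuous_on_subset[OF Gc]) (use \<tau> in auto)
  have w\<tau>: "w integrable_on {c..\<tau>}" using integrable_subinterval_real[OF wi] \<tau> by auto
  have "integral {c..\<tau>} (\<lambda>s. A s *v X s + w s) = integral {c..\<tau>} (\<lambda>r. (A r ** \<Phi> r c) *v y0) + integral {c..\<tau>} (\<lambda>r. (A r ** \<Phi> r c) *v G r) + integral {c..\<tau>} w"
    unfolding AX by (simp add: integral_add i1 i2 w\<tau> integrable_add)
  also have "\<dots> = (\<Phi> \<tau> c - mat 1) *v y0 + (\<Phi> \<tau> c *v G \<tau> - integral {c..\<tau>} w) + integral {c..\<tau>} w"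
    using l1 ibp1 ibp2 by simp
  also have "\<dots> = X \<tau> - y0"
    by (simp add: Xeq matrix_vector_mult_diff_rdistrib matrix_vector_right_distrib)
  finally show "X \<tau> = y0 + integral {c..\<tau>} (\<lambda>s. A s *v X s + w s)" by simp
qed

lemma vc:
  fixes x f :: "real \<Rightarrow> real^'n"
  assumes sub: "{c..d} \<subseteq> {a..b}" and cd: "c \<le> d"
    and f: "f absolutely_integrable_on {c..d}"
    and xeq: "\<And>\<tau>. \<tau> \<in> {c..d} \<Longrightarrow> x \<tau> = x c + integral {c..\<tau>} f"
    and \<tau>: "\<tau> \<in> {c..d}"
  shows "x \<tau> = \<Phi> \<tau> c *v (x c + integral {c..\<tau>} (\<lambda>s. \<Phi> c s *v (f s - A s *v x s)))"
proof -
  have fi: "f integrable_on {c..d}" using f absolutely_integrable_on_def by blast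
  have "continuous_on {c..d} (\<lambda>\<tau>. x c + integral {c..\<tau>} f)"
    by (intro continuous_intros indefinite_integral_continuous_1[OF fi])
  then have xc: "continuous_on {c..d} x"
    by (rule continuous_on_eq) (erule xeq[symmetric])
  have Acd: "continuous_on {c..d} A" by (rule continuous_on_subset[OF Ac sub])
  have Axc: "continuous_on {c..d} (\<lambda>s. A s *v x s)" by (rule bilinear_continuous_on_compose[OF Acd xc bilinear_mv])
  define w where "w s = f s - A s *v x s" for s
  have w: "w absolutely_integrable_on {c..d}"
    unfolding w_def using set_integral_diff(1)[OF f absolutely_integrable_continuous_real[OF Axc]] .
  define X where "X \<tau> = \<Phi> \<tau> c *v (x c + integral {c..\<tau>} (\<lambda>s. \<Phi> c s *v w s))" for \<tau>
  have Xc: "continuous_on {c..d} X" unfolding X_def[abs_def] by (rule vc_sol(1)[OF sub cd w])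
  have sol2: "(\<lambda>s. A s *v X s + w s) absolutely_integrable_on {c..d}" unfolding X_def by (rule vc_sol(2)[OF sub cd w])
  have sol3: "X t = x c + integral {c..t} (\<lambda>s. A s *v X s + w s)" if "t \<in> {c..d}" for t
    unfolding X_def by (rule vc_sol(3)[OF sub cd w that])
  define z where "z t = x t - X t" for t
  have zc: "continuous_on {c..d} z" unfolding z_def by (intro continuous_intros xc Xc)
  have Azc: "continuous_on {c..d} (\<lambda>s. A s *v z s)" by (rule bilinear_continuous_on_compose[OF Acd zc bilinear_mv])
  have AXwi: "(\<lambda>s. A s *v X s + w s) integrable_on {c..d}" using sol2 absolutely_integrable_on_def by blast
  have zeq: "z t = integral {c..t} (\<lambda>s. A s *v z s)" if t: "t \<in> {c..d}" for t
  proof -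
    have sub3: "{c..t} \<subseteq> {c..d}" using t by auto
    have i1: "(\<lambda>s. A s *v X s + w s) integrable_on {c..t}" using integrable_subinterval_real[OF AXwi sub3] .
    have i2: "f integrable_on {c..t}" using integrable_subinterval_real[OF fi sub3] .
    have "z t = integral {c..t} f - integral {c..t} (\<lambda>s. A s *v X s + w s)"
      using xeq[OF t] sol3[OF t] unfolding z_def by simp
    also have "\<dots> = integral {c..t} (\<lambda>s. f s - (A s *v X s + w s))" using integral_diff[OF i2 i1] by simp
    also have "\<dots> = integral {c..t} (\<lambda>s. A s *v z s)"
      by (rule integral_cong) (simp add: w_def z_def matrix_vector_mult_diff_distrib)
    finally show ?thesis .
  qed
  have "z \<tau> = 0"
  proof (rule lin_ode_unique_sub[OF sub _ _ _ \<tau>])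
    show "c \<in> {c..d}" using cd by simp
    show "z c = 0" using zeq[of c] cd by simp
    fix t assume t: "t \<in> {c..d}"
    show "(z has_vector_derivative A t *v z t) (at t within {c..d})"
      by (rule has_vector_derivative_transform[OF t zeq integral_has_vector_derivative[OF Azc t]])
  qed
  then show ?thesis unfolding z_def X_def w_def by simp
qed

end


lemma continuous_on_det:
  assumes "continuous_on S (N :: 'x::topological_space \<Rightarrow> real^'n^'n)"
  shows "continuous_on S (\<lambda>s. det (N s))"
  unfolding det_def
  by (intro continuous_on_sum continuous_on_mult continuous_on_const continuous_on_prod
        continuous_on_component[OF continuous_on_component[OF assms]])

lemma minv_cramer:
  fixes M :: "real^'n^'n"
  assumes "invertible M"
  shows "matrix_inv M = (\<chi> i j. det (\<chi> p q. if q = i then axis j 1 $ p else M $ p $ q) / det M)"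
proof -
  have d: "det M \<noteq> 0" using assms invertible_det_nz by blast
  have "matrix_inv M $ i $ j = det (\<chi> p q. if q = i then axis j 1 $ p else M $ p $ q) / det M" for i j
  proof -
    have "M *v (matrix_inv M *v axis j 1) = axis j 1"
      using minv(1)[OF assms] by (simp add: matrix_vector_mul_assoc)
    then have "matrix_inv M *v axis j 1 = (\<chi> k. det(\<chi> p q. if q = k then axis j 1 $ p else M $ p $ q) / det M)"
      using cramer[OF d] by blast
    then have "(matrix_inv M *v axis j 1) $ i = det (\<chi> p q. if q = i then axis j 1 $ p else M $ p $ q) / det M"
      by simp
    moreover have "(matrix_inv M *v axis j 1) $ i = matrix_inv M $ i $ j"
      by (simp add: matrix_vector_mult_def axis_def if_distrib cong: if_cong)
    ultimately show ?thesis by simp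
  qed
  then show ?thesis by (simp add: vec_eq_iff)
qed

lemma cont_minv:
  fixes M :: "'x::topological_space \<Rightarrow> real^'n^'n"
  assumes c: "continuous_on S M" and inv: "\<And>s. s \<in> S \<Longrightarrow> invertible (M s)"
  shows "continuous_on S (\<lambda>s. matrix_inv (M s))"
proof -
  have eq: "matrix_inv (M s) = (\<chi> i j. det (\<chi> p q. if q = i then axis j 1 $ p else M s $ p $ q) / det (M s))"
    if "s \<in> S" for s using minv_cramer[OF inv[OF that]] .
  have cN: "continuous_on S (\<lambda>s. (\<chi> p q. if q = i then axis j 1 $ p else M s $ p $ q) :: real^'n^'n)" for i j :: 'n
  proof (intro continuous_on_vec_lambda allI)
    fix p q :: 'n
    show "continuous_on S (\<lambda>s. if q = i then axis j 1 $ p else M s $ p $ q)"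
      by (cases "q = i") (auto intro: continuous_on_component[OF continuous_on_component[OF c]])
  qed
  have "continuous_on S (\<lambda>s. (\<chi> i j. det (\<chi> p q. if q = i then axis j 1 $ p else M s $ p $ q) / det (M s)) :: real^'n^'n)"
    by (intro continuous_on_vec_lambda allI continuous_on_divide continuous_on_det cN c)
       (use inv invertible_det_nz in blast)
  then show ?thesis by (rule continuous_on_eq) (simp add: eq)
qed

lemma ae_zero_of_integral0:
  fixes f :: "real \<Rightarrow> real"
  assumes fi: "f integrable_on S" and nn: "\<And>x. x \<in> S \<Longrightarrow> f x \<ge> 0" and z: "integral S f = 0"
  shows "AE x in lebesgue. x \<in> S \<longrightarrow> f x = 0"
proof -
  have af: "f absolutely_integrable_on S"
    using nn by (intro absolutely_integrable_onI fi integrable_eq[OF fi]) simp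
  then have "integral S f = set_lebesgue_integral lebesgue S f"
    by (intro set_lebesgue_integral_eq_integral(2)[symmetric])
  then have "(\<integral>x. indicator S x *\<^sub>R f x \<partial>lebesgue) = 0" using z unfolding set_lebesgue_integral_def by simp
  moreover have "integrable lebesgue (\<lambda>x. indicat_real S x *\<^sub>R f x)"
    by (metis af set_integrable_def)
  ultimately have "AE x in lebesgue. indicator S x *\<^sub>R f x = 0"
    using integral_nonneg_eq_0_iff_AE[of lebesgue "\<lambda>x. indicat_real S x *\<^sub>R f x"] nn
    by (auto simp: indicator_def)
  then show ?thesis by eventually_elim (auto simp: indicator_def split: if_splits)
qed

context stm begin

lemma S_quad:
  assumes c: "c \<in> {a..b}" and sub: "{c..d} \<subseteq> {a..b}"
  shows "y \<bullet> (integral {c..d} (\<lambda>s. \<Phi> c s ** transpose (\<Phi> c s)) *v y) = integral {c..d} (\<lambda>s. norm (transpose (\<Phi> c s) *v y)^2)"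
proof -
  have Kc: "continuous_on {c..d} (\<lambda>s. \<Phi> c s ** transpose (\<Phi> c s))"
    by (intro bilinear_continuous_on_compose[OF _ _ bilinear_mm] continuous_on_transpose continuous_on_subset[OF Phi_cont2[OF c] sub])
  have Ki: "(\<lambda>s. \<Phi> c s ** transpose (\<Phi> c s)) integrable_on {c..d}" by (rule integrable_continuous_real[OF Kc])
  have bl: "bounded_linear (\<lambda>X::real^'n^'n. y \<bullet> (X *v y))"
    by (intro bounded_linear_compose[OF bounded_linear_inner_right] bounded_bilinear.bounded_linear_left[OF bb_mv, simplified])
  have "y \<bullet> (integral {c..d} (\<lambda>s. \<Phi> c s ** transpose (\<Phi> c s)) *v y) = integral {c..d} (\<lambda>s. y \<bullet> ((\<Phi> c s ** transpose (\<Phi> c s)) *v y))"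
    using integral_linear[OF Ki bl] by (simp add: o_def)
  also have "\<dots> = integral {c..d} (\<lambda>s. norm (transpose (\<Phi> c s) *v y)^2)"
  proof (rule integral_cong)
    fix s
    have "y \<bullet> ((\<Phi> c s ** transpose (\<Phi> c s)) *v y) = y \<bullet> (\<Phi> c s *v (transpose (\<Phi> c s) *v y))"
      by (simp only: matrix_vector_mul_assoc)
    also have "\<dots> = (y v* \<Phi> c s) \<bullet> (transpose (\<Phi> c s) *v y)" by (simp add: dot_lmul_matrix)
    also have "\<dots> = norm (transpose (\<Phi> c s) *v y)^2" by (simp add: power2_norm_eq_inner)
    finally show "y \<bullet> ((\<Phi> c s ** transpose (\<Phi> c s)) *v y) = norm (transpose (\<Phi> c s) *v y)^2" .
  qed
  finally show ?thesis .
qed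

lemma S_inv:
  assumes cd: "c < d" and sub: "{c..d} \<subseteq> {a..b}"
  shows "invertible (integral {c..d} (\<lambda>s. \<Phi> c s ** transpose (\<Phi> c s)))"
proof -
  let ?S = "integral {c..d} (\<lambda>s. \<Phi> c s ** transpose (\<Phi> c s))"
  have c: "c \<in> {a..b}" using cd sub by auto
  have "y = 0" if Sy: "?S *v y = 0" for y
  proof -
    define h where "h s = norm (transpose (\<Phi> c s) *v y)^2" for s
    have hc: "continuous_on {c..d} h" unfolding h_def
      by (intro continuous_intros bilinear_continuous_on_compose[OF _ _ bilinear_mv] continuous_on_transpose continuous_on_subset[OF Phi_cont2[OF c] sub])
    have "integral {c..d} h = 0" using S_quad[OF c sub, of y] Sy unfolding h_def by simp
    then have hint: "(h has_integral 0) {c..d}" using integrable_continuous_real[OF hc] by (metis has_integral_integral)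
    have "h c = 0"
    proof (rule has_integral_0_closure_imp_0[of "{c<..<d}" h c])
      show "continuous_on (closure {c<..<d}) h" using hc cd by simp
      show "\<And>x. x \<in> {c<..<d} \<Longrightarrow> 0 \<le> h x" by (simp add: h_def)
      show "0 < emeasure lborel {c<..<d}" using cd by simp
      show "emeasure lborel {c<..<d} < \<infinity>" using cd by simp
      show "emeasure lborel (closure {c<..<d}) = emeasure lborel {c<..<d}" using cd by simp
      show "open {c<..<d}" by simp
      show "(h has_integral 0) (closure {c<..<d})" using hint cd by simp
      show "c \<in> closure {c<..<d}" using cd by simp
    qed
    then show "y = 0" using Phi_diag[OF c] by (simp add: h_def)
  qed
  then have "\<exists>B. B ** ?S = mat 1" using matrix_left_invertible_ker by blast
  then show ?thesis using invertible_left_inverse by blast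
qed

end


locale prob = stm A a b \<Phi> for A :: "real \<Rightarrow> real^'n^'n" and a b \<Phi> +
  fixes B :: "real \<Rightarrow> real^'n^'n" and m :: nat and tp :: "nat \<Rightarrow> real" and xs :: "nat \<Rightarrow> real^'n"
  assumes m1: "m \<ge> 1" and tp0: "tp 0 = a" and tpm: "tp m = b" and tpinc: "\<And>i. i < m \<Longrightarrow> tp i < tp (Suc i)"
    and Binv: "\<And>t. t \<in> {a..b} \<Longrightarrow> invertible (B t)"
    and Bc: "continuous_on {a..b} B"
begin

lemma tp_mono: "i \<le> j \<Longrightarrow> j \<le> m \<Longrightarrow> tp i \<le> tp j"
proof (induction j)
  case 0 then show ?case by simp
next
  case (Suc j)
  show ?case
  proof (cases "i = Suc j")
    case False
    then have "tp i \<le> tp j" using Suc by auto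
    also have "tp j \<le> tp (Suc j)" using tpinc[of j] Suc.prems by auto
    finally show ?thesis .
  qed simp
qed

lemma tp_smono: "i < j \<Longrightarrow> j \<le> m \<Longrightarrow> tp i < tp j"
  using tpinc[of i] tp_mono[of "Suc i" j] by auto

lemma tp_ab: "i \<le> m \<Longrightarrow> tp i \<in> {a..b}"
  using tp_mono[of 0 i] tp_mono[of i m] tp0 tpm by auto

lemma ab: "a < b" using tp_smono[of 0 m] m1 tp0 tpm by auto

lemma I_sub: "i < m \<Longrightarrow> {tp i..tp (Suc i)} \<subseteq> {a..b}"
  using tp_ab[of i] tp_ab[of "Suc i"] by auto

lemma glue_integrable:
  fixes f :: "real \<Rightarrow> 'z::banach"
  assumes "\<And>i. i < m \<Longrightarrow> f integrable_on {tp i..tp (Suc i)}"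
  shows "f integrable_on {a..b}"
proof -
  have "Suc k \<le> m \<Longrightarrow> f integrable_on {tp 0..tp (Suc k)}" for k
  proof (induction k)
    case 0 then show ?case using assms[of 0] by simp
  next
    case (Suc k)
    show ?case
      by (rule Henstock_Kurzweil_Integration.integrable_combine[of _ "tp (Suc k)"]) (use Suc assms[of "Suc k"] tp_mono[of 0 "Suc k"] tpinc[of "Suc k"] in auto)
  qed
  from this[of "m - 1"] m1 tp0 tpm show ?thesis by simp
qed

lemma integral_sum:
  fixes f :: "real \<Rightarrow> 'z::banach"
  assumes f: "f integrable_on {a..b}"
  shows "integral {a..b} f = (\<Sum>i<m. integral {tp i..tp (Suc i)} f)"
proof -
  have "Suc k \<le> m \<Longrightarrow> integral {tp 0..tp (Suc k)} f = (\<Sum>i<Suc k. integral {tp i..tp (Suc i)} f)" for k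
  proof (induction k)
    case 0 then show ?case by simp
  next
    case (Suc k)
    have "integral {tp 0..tp (Suc (Suc k))} f = integral {tp 0..tp (Suc k)} f + integral {tp (Suc k)..tp (Suc (Suc k))} f"
    proof (rule Henstock_Kurzweil_Integration.integral_combine[symmetric])
      show "tp 0 \<le> tp (Suc k)" using tp_mono[of 0 "Suc k"] Suc.prems by auto
      show "tp (Suc k) \<le> tp (Suc (Suc k))" using tpinc[of "Suc k"] Suc.prems by auto
      show "f integrable_on {tp 0..tp (Suc (Suc k))}"
        by (rule integrable_subinterval_real[OF f]) (use tp_ab[of "Suc (Suc k)"] Suc.prems tp0 in auto)
    qed
    then show ?case using Suc by simp
  qed
  from this[of "m - 1"] m1 tp0 tpm show ?thesis by simp
qed

definition idx :: "real \<Rightarrow> nat" where "idx t = Max {i. i < m \<and> tp i \<le> t}"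

lemma idx_eq:
  assumes i: "i < m" and t1: "tp i \<le> t" and t2: "t < tp (Suc i) \<or> Suc i = m"
  shows "idx t = i"
  unfolding idx_def
proof (rule Max_eqI)
  show "finite {i. i < m \<and> tp i \<le> t}" by simp
  show "i \<in> {i. i < m \<and> tp i \<le> t}" using i t1 by simp
  fix j assume "j \<in> {i. i < m \<and> tp i \<le> t}"
  then have j: "j < m" "tp j \<le> t" by auto
  show "j \<le> i"
  proof (rule ccontr)
    assume "\<not> j \<le> i"
    then have "Suc i \<le> j" by simp
    then have "tp (Suc i) \<le> tp j" using tp_mono j by auto
    then show False using t2 j \<open>Suc i \<le> j\<close> by auto
  qed
qed

lemma cover: "t \<in> {a..b} \<Longrightarrow> \<exists>i<m. t \<in> {tp i..tp (Suc i)} \<and> idx t = i"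
proof -
  assume t: "t \<in> {a..b}"
  have "finite {i. i < m \<and> tp i \<le> t}" by simp
  moreover have "0 \<in> {i. i < m \<and> tp i \<le> t}" using m1 tp0 t by auto
  ultimately have k: "idx t \<in> {i. i < m \<and> tp i \<le> t}" unfolding idx_def by (intro Max_in) auto
  define i where "i = idx t"
  have "i < m" "tp i \<le> t" using k i_def by auto
  moreover have "t \<le> tp (Suc i)"
  proof (cases "Suc i = m")
    case True then show ?thesis using t tpm by simp
  next
    case False
    then have "Suc i < m" using \<open>i < m\<close> by simp
    show ?thesis
    proof (rule ccontr)
      assume "\<not> t \<le> tp (Suc i)"
      then have "Suc i \<in> {i. i < m \<and> tp i \<le> t}" using \<open>Suc i < m\<close> by auto
      then have "Suc i \<le> idx t" unfolding idx_def by simp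
      then show False using i_def by simp
    qed
  qed
  ultimately show ?thesis using i_def by auto
qed

definition "Sm i = integral {tp i..tp (Suc i)} (\<lambda>s. \<Phi> (tp i) s ** transpose (\<Phi> (tp i) s))"
definition "vv i = \<Phi> (tp i) (tp (Suc i)) *v xs (Suc i) - xs i"
definition "lam i = matrix_inv (Sm i) *v vv i"
definition "wl i s = transpose (\<Phi> (tp i) s) *v lam i"
definition "Xl i t = \<Phi> t (tp i) *v (xs i + integral {tp i..t} (\<lambda>s. \<Phi> (tp i) s *v wl i s))"
definition "ws t = wl (idx t) t"
definition "us t = matrix_inv (B t) *v ws t"
definition "xst t = Xl (idx t) t"

lemma wl_cont: assumes i: "i < m" shows "continuous_on {tp i..tp (Suc i)} (wl i)"
  unfolding wl_def[abs_def]
  by (intro bilinear_continuous_on_compose[OF _ _ bilinear_mv] continuous_on_transpose continuous_on_const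
      continuous_on_subset[OF Phi_cont2 I_sub[OF i]]) (use tp_ab[of i] i in auto)

lemma Sm_inv: "i < m \<Longrightarrow> invertible (Sm i)"
  unfolding Sm_def by (rule S_inv[OF tpinc I_sub])

lemma int_Phi_wl:
  assumes i: "i < m" and t: "t \<in> {tp i..tp (Suc i)}"
  shows "integral {tp i..t} (\<lambda>s. \<Phi> (tp i) s *v wl i s) = integral {tp i..t} (\<lambda>s. \<Phi> (tp i) s ** transpose (\<Phi> (tp i) s)) *v lam i"
proof -
  have sub: "{tp i..t} \<subseteq> {a..b}" using I_sub[OF i] t by auto
  have c: "tp i \<in> {a..b}" using tp_ab i by simp
  have Kc: "continuous_on {tp i..t} (\<lambda>s. \<Phi> (tp i) s ** transpose (\<Phi> (tp i) s))"
    by (intro bilinear_continuous_on_compose[OF _ _ bilinear_mm] continuous_on_transpose continuous_on_subset[OF Phi_cont2[OF c] sub])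
  have "integral {tp i..t} ((\<lambda>X. X *v lam i) \<circ> (\<lambda>s. \<Phi> (tp i) s ** transpose (\<Phi> (tp i) s))) = integral {tp i..t} (\<lambda>s. \<Phi> (tp i) s ** transpose (\<Phi> (tp i) s)) *v lam i"
    by (rule integral_linear[OF integrable_continuous_real[OF Kc]]) (rule bounded_bilinear.bounded_linear_left[OF bb_mv, simplified])
  then show ?thesis by (simp add: o_def wl_def matrix_vector_mul_assoc del: transpose_matrix_vector)
qed

lemma int_Phi_wl_end: "i < m \<Longrightarrow> integral {tp i..tp (Suc i)} (\<lambda>s. \<Phi> (tp i) s *v wl i s) = vv i"
  using int_Phi_wl[of i "tp (Suc i)"] tpinc[of i] minv(1)[OF Sm_inv[of i]]
  by (simp add: Sm_def[symmetric] lam_def matrix_vector_mul_assoc)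

lemma Xl_start: "i < m \<Longrightarrow> Xl i (tp i) = xs i"
  using Phi_diag[OF tp_ab[of i]] by (simp add: Xl_def)

lemma Xl_end: "i < m \<Longrightarrow> Xl i (tp (Suc i)) = xs (Suc i)"
proof -
  assume i: "i < m"
  have c: "tp i \<in> {a..b}" and d: "tp (Suc i) \<in> {a..b}" using tp_ab i by auto
  have "Xl i (tp (Suc i)) = \<Phi> (tp (Suc i)) (tp i) *v (\<Phi> (tp i) (tp (Suc i)) *v xs (Suc i))"
    unfolding Xl_def int_Phi_wl_end[OF i] vv_def by simp
  also have "\<dots> = xs (Suc i)" using Phi_inv[OF d c] by (simp add: matrix_vector_mul_assoc)
  finally show ?thesis .
qed

lemma Xl_sol:
  assumes i: "i < m"
  shows "continuous_on {tp i..tp (Suc i)} (Xl i)"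
    and "(\<lambda>s. A s *v Xl i s + wl i s) absolutely_integrable_on {tp i..tp (Suc i)}"
    and "\<And>\<tau>. \<tau> \<in> {tp i..tp (Suc i)} \<Longrightarrow> Xl i \<tau> = xs i + integral {tp i..\<tau>} (\<lambda>s. A s *v Xl i s + wl i s)"
proof -
  have w: "wl i absolutely_integrable_on {tp i..tp (Suc i)}"
    by (rule absolutely_integrable_continuous_real[OF wl_cont[OF i]])
  have le: "tp i \<le> tp (Suc i)" using tpinc[OF i] by simp
  show "continuous_on {tp i..tp (Suc i)} (Xl i)" unfolding Xl_def[abs_def] by (rule vc_sol(1)[OF I_sub[OF i] le w])
  show "(\<lambda>s. A s *v Xl i s + wl i s) absolutely_integrable_on {tp i..tp (Suc i)}" unfolding Xl_def by (rule vc_sol(2)[OF I_sub[OF i] le w])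
  fix \<tau> assume "\<tau> \<in> {tp i..tp (Suc i)}"
  then show "Xl i \<tau> = xs i + integral {tp i..\<tau>} (\<lambda>s. A s *v Xl i s + wl i s)" unfolding Xl_def by (rule vc_sol(3)[OF I_sub[OF i] le w])
qed

lemma xst_eq:
  assumes i: "i < m" and t: "t \<in> {tp i..tp (Suc i)}"
  shows "xst t = Xl i t"
proof (cases "t < tp (Suc i) \<or> Suc i = m")
  case True
  then show ?thesis using idx_eq[OF i _ True] t by (simp add: xst_def)
next
  case False
  then have t': "t = tp (Suc i)" "Suc i < m" using t i by auto
  have "idx t = Suc i" using idx_eq[of "Suc i" t] t' tpinc[of "Suc i"] by auto
  then show ?thesis using t' Xl_start[of "Suc i"] Xl_end[OF i] by (simp add: xst_def)
qed

lemma ws_eq: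
  assumes i: "i < m" and t: "t \<in> {tp i..tp (Suc i)} - {tp (Suc i)}"
  shows "ws t = wl i t"
  using idx_eq[OF i, of t] t by (simp add: ws_def)

lemma Bus: "t \<in> {a..b} \<Longrightarrow> B t *v us t = ws t"
  using minv(1)[OF Binv] by (simp add: us_def matrix_vector_mul_assoc)

end


context prob begin

lemma glue_spike:
  fixes f :: "real \<Rightarrow> 'z::banach"
  assumes "\<And>i. i < m \<Longrightarrow> g i integrable_on {tp i..tp (Suc i)}"
    and "\<And>i t. i < m \<Longrightarrow> t \<in> {tp i..tp (Suc i)} - {tp (Suc i)} \<Longrightarrow> f t = g i t"
  shows "f integrable_on {a..b}"
proof (rule glue_integrable)
  fix i assume i: "i < m"
  show "f integrable_on {tp i..tp (Suc i)}"
    by (rule integrable_spike_finite[of "{tp (Suc i)}", OF _ _ assms(1)[OF i]]) (use assms(2)[OF i] in auto)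
qed

definition "Fs s = A s *v xst s + B s *v us s"

lemma Fs_eq: "i < m \<Longrightarrow> t \<in> {tp i..tp (Suc i)} - {tp (Suc i)} \<Longrightarrow> Fs t = A t *v Xl i t + wl i t"
  using xst_eq[of i t] ws_eq[of i t] Bus[of t] I_sub[of i] by (auto simp: Fs_def)

lemma Fs_loc_cont: "i < m \<Longrightarrow> continuous_on {tp i..tp (Suc i)} (\<lambda>t. A t *v Xl i t + wl i t)"
  by (intro continuous_intros bilinear_continuous_on_compose[OF _ _ bilinear_mv] continuous_on_subset[OF Ac I_sub]
      Xl_sol(1) wl_cont) auto

lemma Fs_abs: "Fs absolutely_integrable_on {a..b}"
proof (rule absolutely_integrable_onI)
  show "Fs integrable_on {a..b}"
    by (rule glue_spike[OF integrable_continuous_real[OF Fs_loc_cont] Fs_eq])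
  show "(\<lambda>x. norm (Fs x)) integrable_on {a..b}"
    by (rule glue_spike[of "\<lambda>i t. norm (A t *v Xl i t + wl i t)"])
       (use integrable_continuous_real[OF continuous_on_norm[OF Fs_loc_cont]] Fs_eq in auto)
qed

lemma ws_abs: "ws absolutely_integrable_on {a..b}"
proof (rule absolutely_integrable_onI)
  show "ws integrable_on {a..b}"
    by (rule glue_spike[OF integrable_continuous_real[OF wl_cont] ws_eq])
  show "(\<lambda>x. norm (ws x)) integrable_on {a..b}"
    by (rule glue_spike[of "\<lambda>i t. norm (wl i t)"])
       (use integrable_continuous_real[OF continuous_on_norm[OF wl_cont]] ws_eq in auto)
qed

lemma us_meas: "us measurable_on {a..b}"
proof -
  have "continuous_on {a..b} (\<lambda>t. matrix_inv (B t))" by (rule cont_minv[OF Bc Binv])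
  then have "us absolutely_integrable_on {a..b}" unfolding us_def[abs_def] by (rule abs_int_mv[OF _ ws_abs])
  then have "us integrable_on {a..b}" using absolutely_integrable_on_def by blast
  then have "us \<in> borel_measurable (lebesgue_on {a..b})" by (rule integrable_imp_measurable)
  moreover have "{a..b} \<in> sets lebesgue" by simp
  ultimately show ?thesis using measurable_on_iff_borel_measurable by metis
qed

lemma cost_int: "(\<lambda>s. (B s *v us s) \<bullet> (B s *v us s)) integrable_on {a..b}"
proof (rule glue_spike)
  fix i assume i: "i < m"
  show "(\<lambda>s. wl i s \<bullet> wl i s) integrable_on {tp i..tp (Suc i)}"
    by (intro integrable_continuous_real continuous_intros wl_cont[OF i])
  fix t assume "t \<in> {tp i..tp (Suc i)} - {tp (Suc i)}"
  then show "(B t *v us t) \<bullet> (B t *v us t) = wl i t \<bullet> wl i t"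
    using ws_eq[OF i] Bus I_sub[OF i] by auto
qed

lemma xst_loc: "i < m \<Longrightarrow> \<tau> \<in> {tp i..tp (Suc i)} \<Longrightarrow> xst \<tau> = xst (tp i) + integral {tp i..\<tau>} Fs"
proof -
  assume i: "i < m" and \<tau>: "\<tau> \<in> {tp i..tp (Suc i)}"
  have "xst \<tau> = xs i + integral {tp i..\<tau>} (\<lambda>s. A s *v Xl i s + wl i s)"
    using xst_eq[OF i \<tau>] Xl_sol(3)[OF i \<tau>] by simp
  also have "integral {tp i..\<tau>} (\<lambda>s. A s *v Xl i s + wl i s) = integral {tp i..\<tau>} Fs"
    by (rule integral_spike[of "{tp (Suc i)}"]) (use Fs_eq[OF i] \<tau> in auto)
  finally show ?thesis using xst_eq[OF i, of "tp i"] Xl_start[OF i] tpinc[OF i] by simp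
qed

lemma xst_glob: "\<tau> \<in> {a..b} \<Longrightarrow> xst \<tau> = xst a + integral {a..\<tau>} Fs"
proof -
  have Fi: "Fs integrable_on {a..b}" using Fs_abs absolutely_integrable_on_def by blast
  have "k \<le> m \<Longrightarrow> a \<le> \<tau> \<Longrightarrow> \<tau> \<le> tp k \<Longrightarrow> xst \<tau> = xst a + integral {a..\<tau>} Fs" for k \<tau>
  proof (induction k arbitrary: \<tau>)
    case 0 then have "\<tau> = a" using tp0 by simp
    then show ?case by simp
  next
    case (Suc k)
    show ?case
    proof (cases "\<tau> \<le> tp k")
      case True then show ?thesis by (intro Suc.IH) (use Suc.prems in auto)
    next
      case False
      then have \<tau>: "\<tau> \<in> {tp k..tp (Suc k)}" using Suc by auto
      have k: "k < m" using Suc by simp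
      have "xst \<tau> = xst (tp k) + integral {tp k..\<tau>} Fs" by (rule xst_loc[OF k \<tau>])
      also have "xst (tp k) = xst a + integral {a..tp k} Fs"
        by (intro Suc.IH) (use Suc.prems tp_ab[of k] k in auto)
      also have "xst a + integral {a..tp k} Fs + integral {tp k..\<tau>} Fs = xst a + integral {a..\<tau>} Fs"
      proof -
        have tk: "a \<le> tp k" "tp k \<le> \<tau>" using tp_ab[of k] k \<tau> by auto
        have "\<tau> \<le> b" using \<tau> tp_ab[of "Suc k"] Suc.prems(1) by auto
        then have "{a..\<tau>} \<subseteq> {a..b}" by auto
        then have "Fs integrable_on {a..\<tau>}" by (rule integrable_subinterval_real[OF Fi])
        then have "integral {a..tp k} Fs + integral {tp k..\<tau>} Fs = integral {a..\<tau>} Fs"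
          by (rule Henstock_Kurzweil_Integration.integral_combine[OF tk])
        then show ?thesis by simp
      qed
      finally show ?thesis .
    qed
  qed
  note gen = this
  assume "\<tau> \<in> {a..b}"
  then show "xst \<tau> = xst a + integral {a..\<tau>} Fs" using gen[of m \<tau>] tpm by simp
qed

lemma xst_nodes: "i \<le> m \<Longrightarrow> xst (tp i) = xs i"
proof -
  assume i: "i \<le> m"
  show ?thesis
  proof (cases "i < m")
    case True then show ?thesis using xst_eq[OF True, of "tp i"] Xl_start[OF True] tpinc[OF True] by simp
  next
    case False
    then have im: "i = m" using i by simp
    have m1': "m - 1 < m" "Suc (m - 1) = m" using m1 by auto
    have "xst (tp m) = Xl (m - 1) (tp m)" using xst_eq[OF m1'(1), of "tp m"] m1'(2) tpinc[OF m1'(1)] by simp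
    also have "\<dots> = xs m" using Xl_end[OF m1'(1)] m1'(2) by simp
    finally show ?thesis using im by simp
  qed
qed

lemma star_feasible: "feasibleP A B a b m tp xs xst us"
  unfolding feasibleP_def admissible_def
proof (intro conjI ballI allI impI)
  show "us measurable_on {a..b}" by (rule us_meas)
  show "(\<lambda>s. (B s *v us s) \<bullet> (B s *v us s)) integrable_on {a..b}" by (rule cost_int)
  show "(\<lambda>s. A s *v xst s + B s *v us s) absolutely_integrable_on {a..b}" using Fs_abs unfolding Fs_def .
  fix \<tau> assume "\<tau> \<in> {a..b}"
  then show "xst \<tau> = xst a + integral {a..\<tau>} (\<lambda>s. A s *v xst s + B s *v us s)" using xst_glob unfolding Fs_def by blast
next
  fix i assume "i \<le> m" then show "xst (tp i) = xs i" by (rule xst_nodes)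
qed

end


context prob begin

lemma feas_w:
  assumes feas: "feasibleP A B a b m tp xs x u"
  shows "(\<lambda>s. B s *v u s) absolutely_integrable_on {a..b}"
    and "\<And>\<tau>. \<tau> \<in> {a..b} \<Longrightarrow> x \<tau> = x a + integral {a..\<tau>} (\<lambda>s. A s *v x s + B s *v u s)"
    and "(\<lambda>s. A s *v x s + B s *v u s) absolutely_integrable_on {a..b}"
    and "(\<lambda>s. (B s *v u s) \<bullet> (B s *v u s)) integrable_on {a..b}"
proof -
  define F where "F s = A s *v x s + B s *v u s" for s
  have F: "F absolutely_integrable_on {a..b}" and xeq: "\<And>\<tau>. \<tau> \<in> {a..b} \<Longrightarrow> x \<tau> = x a + integral {a..\<tau>} F"
    and ww: "(\<lambda>s. (B s *v u s) \<bullet> (B s *v u s)) integrable_on {a..b}"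
  proof -
    have adm: "admissible A B a b x u" using feas unfolding feasibleP_def by blast
    then show "F absolutely_integrable_on {a..b}" unfolding admissible_def F_def[abs_def] by blast
    from adm show "\<And>\<tau>. \<tau> \<in> {a..b} \<Longrightarrow> x \<tau> = x a + integral {a..\<tau>} F" unfolding admissible_def F_def[abs_def] by blast
    from adm show "(\<lambda>s. (B s *v u s) \<bullet> (B s *v u s)) integrable_on {a..b}" unfolding admissible_def by blast
  qed
  show "\<And>\<tau>. \<tau> \<in> {a..b} \<Longrightarrow> x \<tau> = x a + integral {a..\<tau>} (\<lambda>s. A s *v x s + B s *v u s)"
    using xeq unfolding F_def[abs_def] by blast
  show "(\<lambda>s. A s *v x s + B s *v u s) absolutely_integrable_on {a..b}" using F unfolding F_def[abs_def] .
  show "(\<lambda>s. (B s *v u s) \<bullet> (B s *v u s)) integrable_on {a..b}" by (rule ww)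
  have fi: "F integrable_on {a..b}" using F absolutely_integrable_on_def by blast
  have "continuous_on {a..b} (\<lambda>\<tau>. x a + integral {a..\<tau>} F)"
    by (intro continuous_intros indefinite_integral_continuous_1[OF fi])
  then have xc: "continuous_on {a..b} x"
    by (rule continuous_on_eq) (erule xeq[symmetric])
  have Axc: "continuous_on {a..b} (\<lambda>s. A s *v x s)" by (rule bilinear_continuous_on_compose[OF Ac xc bilinear_mv])
  have "(\<lambda>s. F s - A s *v x s) absolutely_integrable_on {a..b}"
    using set_integral_diff(1)[OF F absolutely_integrable_continuous_real[OF Axc]] .
  then show "(\<lambda>s. B s *v u s) absolutely_integrable_on {a..b}" by (simp add: F_def)
qed

lemma feas_local:
  assumes feas: "feasibleP A B a b m tp xs x u" and i: "i < m"
  shows "\<And>\<tau>. \<tau> \<in> {tp i..tp (Suc i)} \<Longrightarrow> x \<tau> = \<Phi> \<tau> (tp i) *v (xs i + integral {tp i..\<tau>} (\<lambda>s. \<Phi> (tp i) s *v (B s *v u s)))"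
    and "integral {tp i..tp (Suc i)} (\<lambda>s. (B s *v u s) \<bullet> (B s *v u s)) =
         integral {tp i..tp (Suc i)} (\<lambda>s. wl i s \<bullet> wl i s) +
         integral {tp i..tp (Suc i)} (\<lambda>s. (B s *v u s - wl i s) \<bullet> (B s *v u s - wl i s))"
    and "(\<lambda>s. (B s *v u s - wl i s) \<bullet> (B s *v u s - wl i s)) integrable_on {tp i..tp (Suc i)}"
proof -
  define c where "c = tp i"
  define d where "d = tp (Suc i)"
  define w where "w s = B s *v u s" for s
  define F where "F s = A s *v x s + B s *v u s" for s
  have cd: "c \<le> d" using tpinc[OF i] by (simp add: c_def d_def)
  have sub: "{c..d} \<subseteq> {a..b}" using I_sub[OF i] by (simp add: c_def d_def)
  have cab: "c \<in> {a..b}" "d \<in> {a..b}" using sub cd by auto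
  note fw = feas_w[OF feas, folded F_def w_def]
  have Fab: "F absolutely_integrable_on {a..b}" using fw(3) unfolding F_def[abs_def] .
  have Fi: "F integrable_on {a..b}" using Fab absolutely_integrable_on_def by blast
  have Fcd: "F absolutely_integrable_on {c..d}" by (rule absolutely_integrable_on_subinterval[OF Fab sub])
  have xeq_ab: "\<And>\<tau>. \<tau> \<in> {a..b} \<Longrightarrow> x \<tau> = x a + integral {a..\<tau>} F" using fw(2) unfolding F_def[abs_def] .
  have xeq: "x \<tau> = x c + integral {c..\<tau>} F" if \<tau>: "\<tau> \<in> {c..d}" for \<tau>
  proof -
    have "\<tau> \<in> {a..b}" using \<tau> sub by auto
    have Fi\<tau>: "F integrable_on {a..\<tau>}" by (rule integrable_subinterval_real[OF Fi]) (use \<open>\<tau> \<in> {a..b}\<close> in auto)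
    have "integral {a..c} F + integral {c..\<tau>} F = integral {a..\<tau>} F"
      by (rule Henstock_Kurzweil_Integration.integral_combine[OF _ _ Fi\<tau>]) (use cab \<tau> in auto)
    then show ?thesis using xeq_ab[OF \<open>\<tau> \<in> {a..b}\<close>] xeq_ab[OF cab(1)] by (simp add: algebra_simps)
  qed
  have xc: "x c = xs i" using feas i unfolding feasibleP_def c_def by auto
  have xd: "x d = xs (Suc i)" using feas i unfolding feasibleP_def d_def by auto
  have vcf: "x \<tau> = \<Phi> \<tau> c *v (xs i + integral {c..\<tau>} (\<lambda>s. \<Phi> c s *v w s))" if \<tau>: "\<tau> \<in> {c..d}" for \<tau>
    using vc[OF sub cd Fcd xeq \<tau>] xc by (simp add: F_def w_def)
  show "\<And>\<tau>. \<tau> \<in> {tp i..tp (Suc i)} \<Longrightarrow> x \<tau> = \<Phi> \<tau> (tp i) *v (xs i + integral {tp i..\<tau>} (\<lambda>s. \<Phi> (tp i) s *v (B s *v u s)))"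
    using vcf unfolding c_def d_def w_def by blast
  define g where "g s = \<Phi> c s *v w s" for s
  have wab: "w absolutely_integrable_on {a..b}" using fw(1) unfolding w_def[abs_def] .
  have wcd: "w absolutely_integrable_on {c..d}" by (rule absolutely_integrable_on_subinterval[OF wab sub])
  have g: "g absolutely_integrable_on {c..d}" unfolding g_def[abs_def]
    by (rule abs_int_mv[OF continuous_on_subset[OF Phi_cont2[OF cab(1)] sub] wcd])
  have gi: "g integrable_on {c..d}" using g absolutely_integrable_on_def by blast
  have Jd: "integral {c..d} g = vv i"
  proof -
    have "xs (Suc i) = \<Phi> d c *v (xs i + integral {c..d} g)" using vcf[of d] cd xd by (simp add: g_def[abs_def])
    then have "\<Phi> c d *v xs (Suc i) = (\<Phi> c d ** \<Phi> d c) *v (xs i + integral {c..d} g)"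
      by (simp add: matrix_vector_mul_assoc)
    also have "\<dots> = xs i + integral {c..d} g" using Phi_inv[OF cab(1) cab(2)] by simp
    finally show ?thesis by (simp add: vv_def c_def d_def)
  qed
  have wwi: "(\<lambda>s. w s \<bullet> w s) integrable_on {c..d}"
    by (rule integrable_subinterval_real[OF fw(4)[unfolded w_def[symmetric]] sub])
  have wlw: "wl i s \<bullet> w s = lam i \<bullet> g s" for s
    by (simp add: wl_def g_def c_def dot_lmul_matrix)
  have wlc: "continuous_on {c..d} (wl i)" using wl_cont[OF i] by (simp add: c_def d_def)
  have wlwl_i: "(\<lambda>s. wl i s \<bullet> wl i s) integrable_on {c..d}"
    by (intro integrable_continuous_real continuous_intros wlc)
  have lg_i: "(\<lambda>s. lam i \<bullet> g s) integrable_on {c..d}"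
    using integrable_linear[OF gi bounded_linear_inner_right[of "lam i"]] by (simp add: o_def)
  have lg2: "(\<lambda>s. 2 * (lam i \<bullet> g s)) integrable_on {c..d}"
    using integrable_on_cmult_left[OF lg_i, of 2] by simp
  have lg: "integral {c..d} (\<lambda>s. lam i \<bullet> g s) = lam i \<bullet> vv i"
    using integral_linear[OF gi bounded_linear_inner_right[of "lam i"]] Jd by (simp add: o_def)
  have wlwl: "integral {c..d} (\<lambda>s. wl i s \<bullet> wl i s) = lam i \<bullet> vv i"
  proof -
    have h: "wl i s \<bullet> wl i s = lam i \<bullet> (\<Phi> c s *v wl i s)" for s
      by (simp add: wl_def c_def dot_lmul_matrix)
    have pi: "(\<lambda>s. \<Phi> c s *v wl i s) integrable_on {c..d}"
      by (intro integrable_continuous_real bilinear_continuous_on_compose[OF _ wlc bilinear_mv]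
          continuous_on_subset[OF Phi_cont2[OF cab(1)] sub])
    have "integral {c..d} (\<lambda>s. wl i s \<bullet> wl i s) = lam i \<bullet> integral {c..d} (\<lambda>s. \<Phi> c s *v wl i s)"
      unfolding h using integral_linear[OF pi bounded_linear_inner_right[of "lam i"]] by (simp add: o_def)
    also have "\<dots> = lam i \<bullet> vv i" using int_Phi_wl_end[OF i] by (simp add: c_def d_def)
    finally show ?thesis .
  qed
  have expand: "(w s - wl i s) \<bullet> (w s - wl i s) = w s \<bullet> w s - 2 * (lam i \<bullet> g s) + wl i s \<bullet> wl i s" for s
    using wlw[of s] by (simp add: inner_diff_left inner_diff_right inner_commute)
  have di: "(\<lambda>s. (w s - wl i s) \<bullet> (w s - wl i s)) integrable_on {c..d}"
    unfolding expand by (intro integrable_add integrable_diff wwi wlwl_i lg2)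
  have "integral {c..d} (\<lambda>s. (w s - wl i s) \<bullet> (w s - wl i s)) =
        integral {c..d} (\<lambda>s. w s \<bullet> w s) - 2 * (lam i \<bullet> vv i) + lam i \<bullet> vv i"
  proof -
    have "integral {c..d} (\<lambda>s. w s \<bullet> w s - 2 * (lam i \<bullet> g s) + wl i s \<bullet> wl i s) =
          integral {c..d} (\<lambda>s. w s \<bullet> w s - 2 * (lam i \<bullet> g s)) + integral {c..d} (\<lambda>s. wl i s \<bullet> wl i s)"
      by (intro integral_add integrable_diff wwi wlwl_i lg2)
    also have "integral {c..d} (\<lambda>s. w s \<bullet> w s - 2 * (lam i \<bullet> g s)) = integral {c..d} (\<lambda>s. w s \<bullet> w s) - integral {c..d} (\<lambda>s. 2 * (lam i \<bullet> g s))"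
      by (intro integral_diff wwi lg2)
    also have "integral {c..d} (\<lambda>s. 2 * (lam i \<bullet> g s)) = 2 * (lam i \<bullet> vv i)"
      using integral_mult[OF lg_i, of 2] lg by simp
    finally show ?thesis unfolding expand wlwl by simp
  qed
  then have "integral {c..d} (\<lambda>s. w s \<bullet> w s) = integral {c..d} (\<lambda>s. wl i s \<bullet> wl i s) + integral {c..d} (\<lambda>s. (w s - wl i s) \<bullet> (w s - wl i s))"
    unfolding wlwl by simp
  then show "integral {tp i..tp (Suc i)} (\<lambda>s. (B s *v u s) \<bullet> (B s *v u s)) =
         integral {tp i..tp (Suc i)} (\<lambda>s. wl i s \<bullet> wl i s) +
         integral {tp i..tp (Suc i)} (\<lambda>s. (B s *v u s - wl i s) \<bullet> (B s *v u s - wl i s))"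
    unfolding c_def d_def w_def .
  show "(\<lambda>s. (B s *v u s - wl i s) \<bullet> (B s *v u s - wl i s)) integrable_on {tp i..tp (Suc i)}"
    using di unfolding c_def d_def w_def .
qed

end


context prob begin

definition "Dv u i = integral {tp i..tp (Suc i)} (\<lambda>s. (B s *v u s - wl i s) \<bullet> (B s *v u s - wl i s))"

lemma cost_star: "cost B a b us = (\<Sum>i<m. integral {tp i..tp (Suc i)} (\<lambda>s. wl i s \<bullet> wl i s))"
  unfolding cost_def integral_sum[OF cost_int]
proof (rule sum.cong[OF refl])
  fix i assume "i \<in> {..<m}" then have i: "i < m" by simp
  show "integral {tp i..tp (Suc i)} (\<lambda>s. (B s *v us s) \<bullet> (B s *v us s)) = integral {tp i..tp (Suc i)} (\<lambda>s. wl i s \<bullet> wl i s)"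
  proof (rule integral_spike[of "{tp (Suc i)}"])
    fix t assume t: "t \<in> {tp i..tp (Suc i)} - {tp (Suc i)}"
    have "t \<in> {a..b}" using t I_sub[OF i] by auto
    then show "wl i t \<bullet> wl i t = (B t *v us t) \<bullet> (B t *v us t)" using Bus ws_eq[OF i t] by simp
  qed simp
qed

lemma cost_decomp:
  assumes feas: "feasibleP A B a b m tp xs x u"
  shows "cost B a b u = cost B a b us + (\<Sum>i<m. Dv u i)"
proof -
  have "cost B a b u = (\<Sum>i<m. integral {tp i..tp (Suc i)} (\<lambda>s. (B s *v u s) \<bullet> (B s *v u s)))"
    unfolding cost_def by (rule integral_sum[OF feas_w(4)[OF feas]])
  also have "\<dots> = (\<Sum>i<m. integral {tp i..tp (Suc i)} (\<lambda>s. wl i s \<bullet> wl i s) + Dv u i)"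
    by (rule sum.cong[OF refl]) (use feas_local(2)[OF feas] in \<open>simp add: Dv_def\<close>)
  also have "\<dots> = cost B a b us + (\<Sum>i<m. Dv u i)" by (simp add: sum.distrib cost_star)
  finally show ?thesis .
qed

lemma Dv_nonneg: "feasibleP A B a b m tp xs x u \<Longrightarrow> i < m \<Longrightarrow> Dv u i \<ge> 0"
  unfolding Dv_def by (rule integral_nonneg[OF feas_local(3)]) auto

lemma star_optimal: "optimalP A B a b m tp xs xst us"
  unfolding optimalP_def
proof (intro conjI allI impI)
  show "feasibleP A B a b m tp xs xst us" by (rule star_feasible)
  fix x' u' assume f: "feasibleP A B a b m tp xs x' u'"
  have "(\<Sum>i<m. Dv u' i) \<ge> 0" by (intro sum_nonneg Dv_nonneg[OF f]) simp
  then show "cost B a b us \<le> cost B a b u'" using cost_decomp[OF f] by simp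
qed

lemma optimal_ae:
  assumes opt: "optimalP A B a b m tp xs x u" and i: "i < m"
  shows "AE s in lebesgue. s \<in> {tp i..tp (Suc i)} \<longrightarrow> B s *v u s = wl i s"
proof -
  have feas: "feasibleP A B a b m tp xs x u" using opt unfolding optimalP_def by blast
  have "cost B a b u \<le> cost B a b us" using opt star_feasible unfolding optimalP_def by blast
  then have le: "(\<Sum>i<m. Dv u i) \<le> 0" using cost_decomp[OF feas] by simp
  have nn: "\<forall>j\<in>{..<m}. Dv u j \<ge> 0" using Dv_nonneg[OF feas] by simp
  then have "(\<Sum>i<m. Dv u i) = 0" using le sum_nonneg[of "{..<m}" "Dv u"] by simp
  then have "Dv u i = 0" using sum_nonneg_eq_0_iff[of "{..<m}" "Dv u"] nn i by simp
  then have "AE s in lebesgue. s \<in> {tp i..tp (Suc i)} \<longrightarrow> (B s *v u s - wl i s) \<bullet> (B s *v u s - wl i s) = 0"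
    unfolding Dv_def by (intro ae_zero_of_integral0 feas_local(3)[OF feas i]) auto
  then show ?thesis by eventually_elim simp
qed

lemma optimal_char:
  assumes opt: "optimalP A B a b m tp xs x u" and i: "i < m"
  shows "\<forall>t\<in>{tp i..tp (Suc i)}.
            x t = \<Phi> t (tp i) *v xs i
                  + (integral {tp i..t} (\<lambda>s. \<Phi> t s ** transpose (\<Phi> (tp i) s)) ** matrix_inv (Sm i)) *v vv i"
    and "AE t in lebesgue. t \<in> {tp i..tp (Suc i)} \<longrightarrow>
            u t = matrix_inv (B t) *v (transpose (\<Phi> (tp i) t) *v (matrix_inv (Sm i) *v vv i))"
proof -
  have feas: "feasibleP A B a b m tp xs x u" using opt unfolding optimalP_def by blast
  note ae = optimal_ae[OF opt i]
  show "AE t in lebesgue. t \<in> {tp i..tp (Suc i)} \<longrightarrow>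
            u t = matrix_inv (B t) *v (transpose (\<Phi> (tp i) t) *v (matrix_inv (Sm i) *v vv i))"
    using ae
  proof eventually_elim
    case (elim t)
    show ?case
    proof
      assume t: "t \<in> {tp i..tp (Suc i)}"
      then have tab: "t \<in> {a..b}" using I_sub[OF i] by auto
      have "u t = matrix_inv (B t) *v (B t *v u t)" using minv(2)[OF Binv[OF tab]] by (simp add: matrix_vector_mul_assoc)
      also have "\<dots> = matrix_inv (B t) *v wl i t" using elim t by simp
      finally show "u t = matrix_inv (B t) *v (transpose (\<Phi> (tp i) t) *v (matrix_inv (Sm i) *v vv i))"
        by (simp add: wl_def lam_def)
    qed
  qed
  obtain N where N2: "{s \<in> space lebesgue. \<not> (s \<in> {tp i..tp (Suc i)} \<longrightarrow> B s *v u s = wl i s)} \<subseteq> N"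
    and N0: "emeasure lebesgue N = 0" "N \<in> sets lebesgue"
    by (rule AE_E[OF ae])
  have N1: "N \<in> null_sets lebesgue" using N0 by (rule null_setsI)
  note N = N1 N2
  have negN: "negligible N" using N(1) negligible_iff_null_sets by blast
  show "\<forall>t\<in>{tp i..tp (Suc i)}.
            x t = \<Phi> t (tp i) *v xs i
                  + (integral {tp i..t} (\<lambda>s. \<Phi> t s ** transpose (\<Phi> (tp i) s)) ** matrix_inv (Sm i)) *v vv i"
  proof
    fix t assume t: "t \<in> {tp i..tp (Suc i)}"
    have c: "tp i \<in> {a..b}" and tab: "t \<in> {a..b}" using I_sub[OF i] t tpinc[OF i] by auto
    have sub: "{tp i..t} \<subseteq> {a..b}" using I_sub[OF i] t by auto
    have "integral {tp i..t} (\<lambda>s. \<Phi> (tp i) s *v (B s *v u s)) = integral {tp i..t} (\<lambda>s. \<Phi> (tp i) s *v wl i s)"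
    proof (rule integral_spike[OF negN])
      fix s assume s: "s \<in> {tp i..t} - N"
      then have "s \<in> {tp i..tp (Suc i)}" using t by auto
      then have "B s *v u s = wl i s" using s N(2) by auto
      then show "\<Phi> (tp i) s *v wl i s = \<Phi> (tp i) s *v (B s *v u s)" by simp
    qed
    also have "\<dots> = integral {tp i..t} (\<lambda>s. \<Phi> (tp i) s ** transpose (\<Phi> (tp i) s)) *v lam i"
      by (rule int_Phi_wl[OF i t])
    finally have J: "integral {tp i..t} (\<lambda>s. \<Phi> (tp i) s *v (B s *v u s)) = integral {tp i..t} (\<lambda>s. \<Phi> (tp i) s ** transpose (\<Phi> (tp i) s)) *v lam i" .
    have Kc: "continuous_on {tp i..t} (\<lambda>s. \<Phi> (tp i) s ** transpose (\<Phi> (tp i) s))"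
      by (intro bilinear_continuous_on_compose[OF _ _ bilinear_mm] continuous_on_transpose continuous_on_subset[OF Phi_cont2[OF c] sub])
    have "integral {tp i..t} (\<lambda>s. \<Phi> t s ** transpose (\<Phi> (tp i) s)) = integral {tp i..t} ((\<lambda>X. \<Phi> t (tp i) ** X) \<circ> (\<lambda>s. \<Phi> (tp i) s ** transpose (\<Phi> (tp i) s)))"
    proof (rule integral_cong)
      fix s assume "s \<in> {tp i..t}"
      then have "s \<in> {a..b}" using sub by auto
      then show "\<Phi> t s ** transpose (\<Phi> (tp i) s) = ((\<lambda>X. \<Phi> t (tp i) ** X) \<circ> (\<lambda>s. \<Phi> (tp i) s ** transpose (\<Phi> (tp i) s))) s"
        using Phi_comp[OF tab c] by (simp add: matrix_mul_assoc)
    qed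
    also have "\<dots> = \<Phi> t (tp i) ** integral {tp i..t} (\<lambda>s. \<Phi> (tp i) s ** transpose (\<Phi> (tp i) s))"
      by (rule integral_linear[OF integrable_continuous_real[OF Kc]]) (rule bounded_bilinear.bounded_linear_right[OF bb_mm, simplified])
    finally have K: "integral {tp i..t} (\<lambda>s. \<Phi> t s ** transpose (\<Phi> (tp i) s)) = \<Phi> t (tp i) ** integral {tp i..t} (\<lambda>s. \<Phi> (tp i) s ** transpose (\<Phi> (tp i) s))" .
    have "x t = \<Phi> t (tp i) *v (xs i + integral {tp i..t} (\<lambda>s. \<Phi> (tp i) s *v (B s *v u s)))"
      by (rule feas_local(1)[OF feas i t])
    also have "\<dots> = \<Phi> t (tp i) *v xs i + (integral {tp i..t} (\<lambda>s. \<Phi> t s ** transpose (\<Phi> (tp i) s)) ** matrix_inv (Sm i)) *v vv i"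
      unfolding J K lam_def by (simp add: matrix_vector_right_distrib matrix_vector_mul_assoc matrix_mul_assoc del: transpose_matrix_vector)
    finally show "x t = \<Phi> t (tp i) *v xs i + (integral {tp i..t} (\<lambda>s. \<Phi> t s ** transpose (\<Phi> (tp i) s)) ** matrix_inv (Sm i)) *v vv i" .
  qed
qed

end

theorem theorem3p2:
  fixes A B :: "real \<Rightarrow> real^'n^'n"
    and \<Phi> :: "real \<Rightarrow> real \<Rightarrow> real^'n^'n"
    and a b :: real and m :: nat and tp :: "nat \<Rightarrow> real"
    and xs :: "nat \<Rightarrow> real^'n"
  assumes part: "m \<ge> 1" "tp 0 = a" "tp m = b" "\<And>i. i < m \<Longrightarrow> tp i < tp (Suc i)"
    and H1: "\<And>t. t \<in> {a..b} \<Longrightarrow> invertible (B t)"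
    and H2: "completely_controllable A B a b"
    and H3: "A C1_differentiable_on {a..b}" "B C1_differentiable_on {a..b}"
    and Phi: "state_transition A a b \<Phi>"
  shows "(\<exists>x u. optimalP A B a b m tp xs x u) \<and>
    (\<forall>x u. optimalP A B a b m tp xs x u \<longrightarrow>
      (\<forall>i<m. let S = integral {tp i..tp (Suc i)} (\<lambda>s. \<Phi> (tp i) s ** transpose (\<Phi> (tp i) s));
                 v = \<Phi> (tp i) (tp (Suc i)) *v xs (Suc i) - xs i in
         (\<forall>t\<in>{tp i..tp (Suc i)}.
            x t = \<Phi> t (tp i) *v xs i
                  + (integral {tp i..t} (\<lambda>s. \<Phi> t s ** transpose (\<Phi> (tp i) s)) ** matrix_inv S) *v v) \<and>
         (AE t in lebesgue. t \<in> {tp i..tp (Suc i)} \<longrightarrow>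
            u t = matrix_inv (B t) *v (transpose (\<Phi> (tp i) t) *v (matrix_inv S *v v)))))"
proof -
  have Ac: "continuous_on {a..b} A" by (rule C1_differentiable_imp_continuous_on[OF H3(1)])
  have Bc: "continuous_on {a..b} B" by (rule C1_differentiable_imp_continuous_on[OF H3(2)])
  interpret prob A a b \<Phi> B m tp xs
    by unfold_locales (use Phi Ac part H1 Bc in auto)
  show ?thesis
  proof (intro conjI allI impI)
    show "\<exists>x u. optimalP A B a b m tp xs x u" using star_optimal by blast
  next
    fix x u i assume opt: "optimalP A B a b m tp xs x u" and i: "i < m"
    show "let S = integral {tp i..tp (Suc i)} (\<lambda>s. \<Phi> (tp i) s ** transpose (\<Phi> (tp i) s));
                 v = \<Phi> (tp i) (tp (Suc i)) *v xs (Suc i) - xs i in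
         (\<forall>t\<in>{tp i..tp (Suc i)}.
            x t = \<Phi> t (tp i) *v xs i
                  + (integral {tp i..t} (\<lambda>s. \<Phi> t s ** transpose (\<Phi> (tp i) s)) ** matrix_inv S) *v v) \<and>
         (AE t in lebesgue. t \<in> {tp i..tp (Suc i)} \<longrightarrow>
            u t = matrix_inv (B t) *v (transpose (\<Phi> (tp i) t) *v (matrix_inv S *v v)))"
      unfolding Let_def using optimal_char[OF opt i] unfolding Sm_def vv_def by blast
  qed
qed


end
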